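(* Fix $p\in(\tfrac12,1)$. For each $n$ and $B\in\{1,\dots,n\}$ let $\theta(B,n)$ be the correctness index of the crowdfunding game $\Gamma(B,n)$ (defined in the context). Then $$\lim_{n\to\infty}\ \max_{B\in\{1,\dots,n\}}\theta(B,n)=\frac{3p-1}{2p}\ (<1).$$
   Context: The crowdfunding game $\Gamma(B,n)$ with parameter $p\in(\tfrac12,1)$: there are $n$ players and a threshold $B\in\{1,\dots,n\}$. A state $\omega\in\{H,L\}$ is drawn with probability $\tfrac12$ each. Conditional on $\omega$, each player $i$ independently receives a signal $s_i\in\{H,L\}$ with $\Pr(s_i=\omega\mid\omega)=p$. Players simultaneously choose $a_i\in\{0,1\}$. Player $i$'s payoff is $1$ if $a_i=1$, $\sum_j a_j\ge B$ and $\omega=H$; $-1$ if $a_i=1$, $\sum_j a_j\ge B$ and $\omega=L$; and $0$ otherwise. A strategy is a map $\sigma_i:\{H,L\}\to[0,1]$ giving the probability of action $1$ after each signal; Bayes-Nash equilibrium is defined as usual. A profile is non-trivial if $\Pr_\sigma(\sum_i a_i\ge B)>0$, and symmetric if all players use the same strategy. It is known that each $\Gamma(B,n)$ has a unique symmetric non-trivial Bayes-Nash equilibrium $\sigma$. The correctness index is $\theta(B,n)=\tfrac12\Pr_\sigma(\sum_{i}a_i\ge B\mid\omega=H)+\tfrac12\Pr_\sigma(\sum_i a_i<B\mid\omega=L)$, computed under this unique equilibrium $\sigma$. *)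

theory Defs
  imports "HOL-Probability.Probability"
begin

text \<open>Crowdfunding game Gamma(B,n) with signal precision p.
  Players are 0..n-1. States and signals: True = H, False = L.
  A strategy is a map bool => real (probability of action 1 after each signal),
  a profile assigns a strategy to each player.\<close>

definition is_strategy :: "(bool \<Rightarrow> real) \<Rightarrow> bool" where
  "is_strategy f \<longleftrightarrow> (\<forall>s. 0 \<le> f s \<and> f s \<le> 1)"

definition game_pmf :: "real \<Rightarrow> nat \<Rightarrow> (nat \<Rightarrow> bool \<Rightarrow> real)
    \<Rightarrow> (bool \<times> (nat \<Rightarrow> bool) \<times> (nat \<Rightarrow> bool)) pmf" where
  "game_pmf p n \<sigma> =
     bind_pmf (bernoulli_pmf (1/2)) (\<lambda>\<omega>.
     bind_pmf (Pi_pmf {..<n} False (\<lambda>i. bernoulli_pmf (if \<omega> then p else 1 - p))) (\<lambda>s.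
     bind_pmf (Pi_pmf {..<n} False (\<lambda>i. bernoulli_pmf (\<sigma> i (s i)))) (\<lambda>a.
     return_pmf (\<omega>, s, a))))"

definition num_contrib :: "nat \<Rightarrow> (nat \<Rightarrow> bool) \<Rightarrow> nat" where
  "num_contrib n a = card {j. j < n \<and> a j}"

definition payoff :: "nat \<Rightarrow> nat \<Rightarrow> nat \<Rightarrow> bool \<times> (nat \<Rightarrow> bool) \<times> (nat \<Rightarrow> bool) \<Rightarrow> real" where
  "payoff B n i x = (case x of (\<omega>, s, a) \<Rightarrow>
     (if a i \<and> num_contrib n a \<ge> B then (if \<omega> then 1 else -1) else 0))"

definition exp_payoff :: "real \<Rightarrow> nat \<Rightarrow> nat \<Rightarrow> (nat \<Rightarrow> bool \<Rightarrow> real) \<Rightarrow> nat \<Rightarrow> real" where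
  "exp_payoff p B n \<sigma> i = measure_pmf.expectation (game_pmf p n \<sigma>) (payoff B n i)"

definition is_BNE :: "real \<Rightarrow> nat \<Rightarrow> nat \<Rightarrow> (nat \<Rightarrow> bool \<Rightarrow> real) \<Rightarrow> bool" where
  "is_BNE p B n \<sigma> \<longleftrightarrow> (\<forall>i<n. is_strategy (\<sigma> i)) \<and>
     (\<forall>i<n. \<forall>\<tau>. is_strategy \<tau> \<longrightarrow> exp_payoff p B n (\<sigma>(i := \<tau>)) i \<le> exp_payoff p B n \<sigma> i)"

definition nontrivial :: "real \<Rightarrow> nat \<Rightarrow> nat \<Rightarrow> (nat \<Rightarrow> bool \<Rightarrow> real) \<Rightarrow> bool" where
  "nontrivial p B n \<sigma> \<longleftrightarrow>
     measure_pmf.prob (game_pmf p n \<sigma>) {(\<omega>, s, a). num_contrib n a \<ge> B} > 0"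

definition sym_eq :: "real \<Rightarrow> nat \<Rightarrow> nat \<Rightarrow> bool \<Rightarrow> real" where
  "sym_eq p B n = (THE f. is_strategy f \<and> is_BNE p B n (\<lambda>_. f) \<and> nontrivial p B n (\<lambda>_. f))"

definition theta :: "real \<Rightarrow> nat \<Rightarrow> nat \<Rightarrow> real" where
  "theta p B n = (let M = game_pmf p n (\<lambda>_. sym_eq p B n) in
     1/2 * (measure_pmf.prob M {(\<omega>, s, a). \<omega> \<and> num_contrib n a \<ge> B}
             / measure_pmf.prob M {(\<omega>, s, a). \<omega>})
   + 1/2 * (measure_pmf.prob M {(\<omega>, s, a). \<not> \<omega> \<and> num_contrib n a < B}
             / measure_pmf.prob M {(\<omega>, s, a). \<not> \<omega>}))"

end

theory Submission
  imports Defs "HOL-Real_Asymp.Real_Asymp"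
begin

definition bt :: "nat \<Rightarrow> real \<Rightarrow> nat \<Rightarrow> real" where
  "bt m x k = (\<Sum>j=k..m. real (m choose j) * x^j * (1-x)^(m-j))"

definition pm :: "nat \<Rightarrow> real \<Rightarrow> nat \<Rightarrow> real" where
  "pm m x k = real (m choose k) * x^k * (1-x)^(m-k)"

lemma bt_0: "bt m x 0 = 1"
proof -
  have "bt m x 0 = (\<Sum>j\<le>m. real (m choose j) * x^j * (1-x)^(m-j))"
    unfolding bt_def by (simp add: atLeast0AtMost)
  also have "\<dots> = (x + (1-x))^m" by (subst binomial_ring) simp
  finally show ?thesis by simp
qed

lemma bt_split: "k \<le> m \<Longrightarrow> bt m x k = pm m x k + bt m x (Suc k)"
  unfolding bt_def pm_def by (simp add: sum.atLeast_Suc_atMost)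

lemma bt_empty: "m < k \<Longrightarrow> bt m x k = 0"
  unfolding bt_def by simp

lemma bt_nonneg: "0 \<le> x \<Longrightarrow> x \<le> 1 \<Longrightarrow> 0 \<le> bt m x k"
  unfolding bt_def by (intro sum_nonneg) auto

lemma pm_nonneg: "0 \<le> x \<Longrightarrow> x \<le> 1 \<Longrightarrow> 0 \<le> pm m x k"
  unfolding pm_def by auto

lemma bt_le1: "0 \<le> x \<Longrightarrow> x \<le> 1 \<Longrightarrow> bt m x k \<le> 1"
proof -
  assume x: "0 \<le> x" "x \<le> 1"
  have "bt m x k \<le> (\<Sum>j=0..m. real (m choose j) * x^j * (1-x)^(m-j))"
    unfolding bt_def by (rule sum_mono2) (use x in auto)
  also have "\<dots> = 1" using bt_0[of m x] unfolding bt_def .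
  finally show ?thesis .
qed

lemma bt_one: "k \<le> m \<Longrightarrow> bt m 1 k = 1"
proof -
  assume "k \<le> m"
  have "bt m 1 k = (\<Sum>j\<in>{m}. real (m choose j) * 1^j * (1-1::real)^(m-j))"
    unfolding bt_def by (rule sum.mono_neutral_right) (use \<open>k \<le> m\<close> in auto)
  thus ?thesis by simp
qed

lemma bt_pos: "0 < x \<Longrightarrow> x \<le> 1 \<Longrightarrow> k \<le> m \<Longrightarrow> 0 < bt m x k"
proof -
  assume x: "0 < x" "x \<le> 1" and k: "k \<le> m"
  have "0 < (\<Sum>j\<in>{m}. real (m choose j) * x^j * (1-x)^(m-j))" using x by simp
  also have "\<dots> \<le> bt m x k"
    unfolding bt_def by (rule sum_mono2) (use x k in auto)
  finally show ?thesis .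
qed

lemma bt_deriv_aux:
  "\<forall>k. k + d = m \<longrightarrow> 1 \<le> k \<longrightarrow>
     ((\<lambda>x. bt m x k) has_real_derivative
        (real m * real ((m-1) choose (k-1)) * x^(k-1) * (1-x)^(m-k))) (at x)"
proof (induction d)
  case 0
  show ?case
  proof (intro allI impI)
    fix k assume k: "k + 0 = m" "1 \<le> k"
    have e: "(\<lambda>x. bt m x k) = (\<lambda>x. x^m)" using k unfolding bt_def by (auto simp: fun_eq_iff)
    show "((\<lambda>x. bt m x k) has_real_derivative
        (real m * real ((m-1) choose (k-1)) * x^(k-1) * (1-x)^(m-k))) (at x)"
      unfolding e using k by (auto intro!: derivative_eq_intros)
  qed
next
  case (Suc d)
  show ?case
  proof (intro allI impI)
    fix k assume k: "k + Suc d = m" "1 \<le> k"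
    obtain k' where k': "k = Suc k'" using k by (cases k) auto
    have IH: "((\<lambda>x. bt m x (Suc k)) has_real_derivative
        (real m * real ((m-1) choose k) * x^k * (1-x)^d)) (at x)"
    proof -
      have "m - Suc k = d" using k by simp
      thus ?thesis using Suc.IH[rule_format, of "Suc k"] k by simp
    qed
    have e: "(\<lambda>x. bt m x k) = (\<lambda>x. real (m choose k) * x^k * (1-x)^(Suc d) + bt m x (Suc k))"
      using k by (auto simp: fun_eq_iff bt_split pm_def)
    have D: "((\<lambda>x. real (m choose k) * x^k * (1-x)^(Suc d)) has_real_derivative
        real (m choose k) * (real k * x^k' * (1-x)^(Suc d) - x^k * (real (Suc d) * (1-x)^d))) (at x)"
    proof -
      have d1: "((\<lambda>x. x^(Suc k')) has_real_derivative real (Suc k') * x^k') (at x)"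
        using DERIV_pow[of "Suc k'" x] by simp
      have d0: "((\<lambda>x. 1 - x) has_real_derivative -1) (at x)"
        by (auto intro!: derivative_eq_intros)
      have d2: "((\<lambda>x. (1-x)^(Suc d)) has_real_derivative real (Suc d) * (1-x)^d * (-1)) (at x)"
        using DERIV_power[OF d0, of "Suc d"] by simp
      have "((\<lambda>x. real (m choose k) * (x^(Suc k') * (1-x)^(Suc d))) has_real_derivative
          real (m choose k) * (x^(Suc k') * (real (Suc d) * (1-x)^d * (-1)) + real (Suc k') * x^k' * (1-x)^(Suc d))) (at x)"
        by (intro DERIV_cmult DERIV_mult' d1 d2)
      thus ?thesis unfolding k' by (simp add: algebra_simps)
    qed
    have i1: "real k * real (m choose k) = real m * real ((m-1) choose k')"
      using binomial_absorption[of k' m] k' by (metis of_nat_mult)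
    have i2: "real (Suc d) * real (m choose k) = real m * real ((m-1) choose k)"
    proof -
      have "Suc d = m - k" using k by simp
      thus ?thesis using binomial_absorb_comp[of m k] by (metis of_nat_mult)
    qed
    have eq: "real (m choose k) * (real k * x^k' * (1-x)^(Suc d) - x^k * (real (Suc d) * (1-x)^d))
        + real m * real ((m-1) choose k) * x^k * (1-x)^d
        = real m * real ((m-1) choose (k-1)) * x^(k-1) * (1-x)^(m-k)"
    proof -
      have "real (m choose k) * (real k * x^k' * (1-x)^(Suc d) - x^k * (real (Suc d) * (1-x)^d))
          = (real k * real (m choose k)) * x^k' * (1-x)^(Suc d) - (real (Suc d) * real (m choose k)) * x^k * (1-x)^d"
        by (simp add: algebra_simps)
      also have "\<dots> = real m * real ((m-1) choose k') * x^k' * (1-x)^(Suc d) - real m * real ((m-1) choose k) * x^k * (1-x)^d"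
        using i1 i2 by simp
      moreover have "m - k = Suc d" "k - 1 = k'" using k k' by auto
      ultimately show ?thesis by (simp add: k')
    qed
    show "((\<lambda>x. bt m x k) has_real_derivative
        (real m * real ((m-1) choose (k-1)) * x^(k-1) * (1-x)^(m-k))) (at x)"
      unfolding e using DERIV_add[OF D IH] eq by simp
  qed
qed

definition dbt :: "nat \<Rightarrow> real \<Rightarrow> nat \<Rightarrow> real" where
  "dbt m x k = real m * real ((m-1) choose (k-1)) * x^(k-1) * (1-x)^(m-k)"

lemma bt_deriv: "1 \<le> k \<Longrightarrow> k \<le> m \<Longrightarrow> ((\<lambda>x. bt m x k) has_real_derivative dbt m x k) (at x)"
  using bt_deriv_aux[of "m-k" m x] unfolding dbt_def by simp

lemma dbt_pos: "1 \<le> k \<Longrightarrow> k \<le> m \<Longrightarrow> 0 < x \<Longrightarrow> x < 1 \<Longrightarrow> 0 < dbt m x k"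
  unfolding dbt_def by (auto intro!: mult_pos_pos)

lemma dbt_nonneg: "0 \<le> x \<Longrightarrow> x \<le> 1 \<Longrightarrow> 0 \<le> dbt m x k"
  unfolding dbt_def by auto

lemma bt_mono: assumes "0 \<le> x" "x \<le> y" "y \<le> 1" shows "bt m x k \<le> bt m y k"
proof (cases "k = 0")
  case True thus ?thesis by (simp add: bt_0)
next
  case False
  show ?thesis
  proof (cases "k \<le> m")
    case True
    show ?thesis
      by (rule DERIV_nonneg_imp_nondecreasing[OF assms(2)])
         (use assms False True in \<open>auto intro!: exI bt_deriv dbt_nonneg\<close>)
  next
    case False thus ?thesis by (simp add: bt_empty)
  qed
qed

lemma bt_cont: "continuous_on A (\<lambda>x. bt m x k)"
  unfolding bt_def by (intro continuous_intros)

lemma bt_factor: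
  assumes k: "1 \<le> k" "k \<le> m" and x: "0 < x" "x < 1"
  shows "bt m x k = x^(k-1) * (1-x)^(m-k) *
           (\<Sum>j=k..m. real (m choose j) * x^(j-k+1) / (1-x)^(j-k))"
  unfolding bt_def sum_distrib_left
proof (rule sum.cong[OF refl])
  fix j assume j: "j \<in> {k..m}"
  have "(k-1) + (j-k+1) = j" "(m-j) + (j-k) = m-k" using j k by auto
  hence e1: "x^j = x^(k-1) * x^(j-k+1)" and e2: "(1-x)^(m-k) = (1-x)^(m-j) * (1-x)^(j-k)"
    by (metis power_add)+
  have "(1-x)^(j-k) > 0" using x by simp
  thus "real (m choose j) * x^j * (1-x)^(m-j) =
      x^(k-1) * (1-x)^(m-k) * (real (m choose j) * x^(j-k+1) / (1-x)^(j-k))"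
    unfolding e1 e2 using x by (simp add: field_simps)
qed

lemma hazard:
  assumes k: "1 \<le> k" "k \<le> m" and xy: "0 < x" "x \<le> y" "y < 1"
  shows "dbt m y k * bt m x k \<le> dbt m x k * bt m y k"
proof -
  define S where "S = (\<lambda>x. (\<Sum>j=k..m. real (m choose j) * x^(j-k+1) / (1-x)^(j-k)))"
  have Sm: "S x \<le> S y" unfolding S_def
  proof (rule sum_mono)
    fix j assume j: "j \<in> {k..m}"
    have n: "x^(j-k+1) \<le> y^(j-k+1)" by (rule power_mono) (use xy in auto)
    have d: "(1-y)^(j-k) \<le> (1-x)^(j-k)" by (rule power_mono) (use xy in auto)
    have "0 < (1-y)^(j-k)" "0 \<le> y^(j-k+1)" using xy by auto
    hence "x^(j-k+1) / (1-x)^(j-k) \<le> y^(j-k+1) / (1-y)^(j-k)"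
      using frac_le[OF _ n _ d] by blast
    thus "real (m choose j) * x^(j-k+1) / (1-x)^(j-k) \<le> real (m choose j) * y^(j-k+1) / (1-y)^(j-k)"
      by (simp add: mult_left_mono times_divide_eq_right[symmetric] del: times_divide_eq_right)
  qed
  define c where "c = real m * real ((m-1) choose (k-1))"
  have c: "c \<ge> 0" unfolding c_def by simp
  have "dbt m y k * bt m x k = c * (y^(k-1) * (1-y)^(m-k)) * (x^(k-1) * (1-x)^(m-k)) * S x"
    using bt_factor[OF k, of x] xy unfolding dbt_def c_def S_def by simp
  also have "\<dots> \<le> c * (y^(k-1) * (1-y)^(m-k)) * (x^(k-1) * (1-x)^(m-k)) * S y"
    by (rule mult_left_mono[OF Sm]) (use xy c in auto)
  also have "\<dots> = dbt m x k * bt m y k"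
    using bt_factor[OF k, of y] xy unfolding dbt_def c_def S_def by simp
  finally show ?thesis .
qed

lemma ratio_decr:
  assumes k: "1 \<le> k" "k \<le> m" and p: "1/2 < p" "p < 1"
    and l: "0 \<le> l1" "l1 < l2" "l2 < 1"
  shows "bt m (p + (1-p)*l2) k * bt m (1-p + p*l1) k < bt m (p + (1-p)*l1) k * bt m (1-p + p*l2) k"
proof -
  define R where "R = (\<lambda>l. bt m (p + (1-p)*l) k / bt m (1-p + p*l) k)"
  have "R l2 < R l1"
  proof (rule DERIV_neg_imp_decreasing[OF l(2)])
    fix l assume ll: "l1 \<le> l" "l \<le> l2"
    define A where "A = p + (1-p)*l"
    define B where "B = 1-p + p*l"
    have pl: "(1-p)*l < 1-p" "p*l < p" "0 \<le> (1-p)*l" "0 \<le> p*l" "(2*p-1)*l \<le> 2*p-1"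
      using ll l p by (auto intro!: mult_strict_left_mono mult_left_le)
    have A: "0 < A" "A < 1" unfolding A_def using pl p by linarith+
    have B: "0 < B" "B < 1" unfolding B_def using pl p by linarith+
    have BA: "B \<le> A" unfolding A_def B_def using pl p by (simp add: algebra_simps)
    have btA: "bt m A k > 0" using bt_pos[of A k m] A k by simp
    have btB: "bt m B k > 0" using bt_pos[of B k m] B k by simp
    have dA: "dbt m A k > 0" using dbt_pos[OF k A] .
    have dB: "dbt m B k > 0" using dbt_pos[OF k B] .
    have hz: "dbt m A k * bt m B k \<le> dbt m B k * bt m A k"
      using hazard[OF k B(1) BA A(2)] .
    have dAl: "((\<lambda>l. bt m (p + (1-p)*l) k) has_real_derivative dbt m A k * (1-p)) (at l)"
      unfolding A_def by (rule DERIV_chain2[OF bt_deriv[OF k]]) (auto intro!: derivative_eq_intros)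
    have dBl: "((\<lambda>l. bt m (1-p + p*l) k) has_real_derivative dbt m B k * p) (at l)"
      unfolding B_def by (rule DERIV_chain2[OF bt_deriv[OF k]]) (auto intro!: derivative_eq_intros)
    have D: "(R has_real_derivative
        (dbt m A k * (1-p) * bt m B k - bt m A k * (dbt m B k * p)) / (bt m B k * bt m B k)) (at l)"
      unfolding R_def using DERIV_divide[OF dAl dBl] btB by (simp add: A_def B_def)
    have "dbt m A k * (1-p) * bt m B k \<le> (1-p) * (dbt m B k * bt m A k)"
      using mult_left_mono[OF hz, of "1-p"] p by (simp add: algebra_simps)
    also have "\<dots> < p * (dbt m B k * bt m A k)"
      using p dA dB btA btB by (intro mult_strict_right_mono) auto
    finally have "(dbt m A k * (1-p) * bt m B k - bt m A k * (dbt m B k * p)) / (bt m B k * bt m B k) < 0"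
      using btB by (intro divide_neg_pos) (auto simp: algebra_simps)
    thus "\<exists>y. (R has_real_derivative y) (at l) \<and> y < 0" using D by blast
  qed
  moreover have "bt m (1-p + p*l1) k > 0" "bt m (1-p + p*l2) k > 0"
  proof -
    have "p*l1 < p" "p*l2 < p" "0 \<le> p*l1" "0 \<le> p*l2"
      using l p by (auto intro!: mult_strict_left_mono)
    thus "bt m (1-p + p*l1) k > 0" "bt m (1-p + p*l2) k > 0"
      using k p by (auto intro!: bt_pos)
  qed
  ultimately show ?thesis unfolding R_def by (simp add: divide_simps)
qed

lemma bt_pascal:
  assumes "k \<le> m"
  shows "bt (Suc m) x (Suc k) = x * bt m x k + (1-x) * bt m x (Suc k)"
proof -
  have "bt (Suc m) x (Suc k) = (\<Sum>j=k..m. real (Suc m choose Suc j) * x^(Suc j) * (1-x)^(m-j))"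
    unfolding bt_def sum.shift_bounds_cl_Suc_ivl by simp
  also have "\<dots> = (\<Sum>j=k..m. real (m choose j) * x^(Suc j) * (1-x)^(m-j))
      + (\<Sum>j=k..m. real (m choose Suc j) * x^(Suc j) * (1-x)^(m-j))"
    by (simp add: sum.distrib[symmetric] algebra_simps)
  also have "(\<Sum>j=k..m. real (m choose j) * x^(Suc j) * (1-x)^(m-j)) = x * bt m x k"
    unfolding bt_def sum_distrib_left by (rule sum.cong) auto
  also have "(\<Sum>j=k..m. real (m choose Suc j) * x^(Suc j) * (1-x)^(m-j))
      = (\<Sum>j=k..m. (\<lambda>i. real (m choose i) * x^i * (1-x)^(Suc (m-i))) (Suc j))"
  proof (rule sum.cong[OF refl])
    fix j assume j: "j \<in> {k..m}"
    show "real (m choose Suc j) * x^(Suc j) * (1-x)^(m-j) = (\<lambda>i. real (m choose i) * x^i * (1-x)^(Suc (m-i))) (Suc j)"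
    proof (cases "j = m")
      case False
      hence "m - j = Suc (m - Suc j)" using j by auto
      thus ?thesis by simp
    qed simp
  qed
  also have "\<dots> = (\<Sum>i=Suc k..Suc m. real (m choose i) * x^i * (1-x)^(Suc (m-i)))"
    by (subst sum.shift_bounds_cl_Suc_ivl[symmetric]) (simp add: o_def)
  also have "\<dots> = (\<Sum>i=Suc k..m. real (m choose i) * x^i * (1-x)^(Suc (m-i)))"
    using assms by (simp add: sum.cl_ivl_Suc)
  also have "\<dots> = (1-x) * bt m x (Suc k)"
    unfolding bt_def sum_distrib_left by (rule sum.cong) auto
  finally show ?thesis .
qed

lemma bt_Suc_Suc:
  assumes "k \<le> m"
  shows "bt (Suc m) x (Suc k) = bt m x k - (1-x) * pm m x k"
  using bt_pascal[OF assms, of x] bt_split[OF assms, of x] by (simp add: algebra_simps)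

definition mixr :: "real \<Rightarrow> bool \<Rightarrow> (bool \<Rightarrow> real) \<Rightarrow> real" where
  "mixr p \<omega> f = (if \<omega> then p else 1-p) * f True + (1 - (if \<omega> then p else 1-p)) * f False"

lemma convex01: fixes q y1 y2 :: real shows "0 \<le> q \<Longrightarrow> q \<le> 1 \<Longrightarrow> 0 \<le> y1 \<Longrightarrow> y1 \<le> 1 \<Longrightarrow> 0 \<le> y2 \<Longrightarrow> y2 \<le> 1
   \<Longrightarrow> (0 \<le> q * y1 + (1-q) * y2) \<and> (q * y1 + (1-q) * y2 \<le> 1)"
proof -
  assume a: "0 \<le> q" "q \<le> 1" "0 \<le> y1" "y1 \<le> 1" "0 \<le> y2" "y2 \<le> 1"
  have "q * y1 \<le> q" by (rule mult_left_le) (use a in auto)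
  moreover have "(1-q) * y2 \<le> 1-q" by (rule mult_left_le) (use a in auto)
  moreover have "0 \<le> q * y1" "0 \<le> (1-q) * y2" using a by auto
  ultimately show ?thesis by linarith
qed

lemma mixr_01: "0 \<le> p \<Longrightarrow> p \<le> 1 \<Longrightarrow> is_strategy f \<Longrightarrow> 0 \<le> mixr p \<omega> f \<and> mixr p \<omega> f \<le> 1"
  unfolding mixr_def is_strategy_def by (intro convex01) auto

lemma bern_bind:
  assumes "0 \<le> q" "q \<le> 1" "is_strategy f"
  shows "bind_pmf (bernoulli_pmf q) (\<lambda>s. bernoulli_pmf (f s)) = bernoulli_pmf (q * f True + (1-q) * f False)"
proof (rule pmf_eqI)
  fix b :: bool
  have f: "0 \<le> f s" "f s \<le> 1" for s using assms(3) unfolding is_strategy_def by auto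
  have c: "0 \<le> q * f True + (1-q) * f False" "q * f True + (1-q) * f False \<le> 1"
    using convex01[OF assms(1,2) f(1,2) f(1,2)] by auto
  show "pmf (bind_pmf (bernoulli_pmf q) (\<lambda>s. bernoulli_pmf (f s))) b = pmf (bernoulli_pmf (q * f True + (1-q) * f False)) b"
    unfolding pmf_bind using assms f c by (cases b) (auto simp: algebra_simps)
qed

lemma game_marg:
  assumes p: "0 \<le> p" "p \<le> 1" and st: "\<forall>j<n. is_strategy (\<sigma> j)"
  shows "map_pmf (\<lambda>(\<omega>,s,a). (\<omega>,a)) (game_pmf p n \<sigma>) =
     bind_pmf (bernoulli_pmf (1/2)) (\<lambda>\<omega>. map_pmf (Pair \<omega>)
        (Pi_pmf {..<n} False (\<lambda>j. bernoulli_pmf (mixr p \<omega> (\<sigma> j)))))"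
  unfolding game_pmf_def map_bind_pmf
proof (rule bind_pmf_cong[OF refl], goal_cases)
  case (1 \<omega>)
  let ?q = "if \<omega> then p else 1 - p"
  have q: "0 \<le> ?q" "?q \<le> 1" using p by auto
  have "map_pmf (\<lambda>(\<omega>, s, a). (\<omega>, a)) (Pi_pmf {..<n} False (\<lambda>i. bernoulli_pmf ?q) \<bind>
         (\<lambda>s. Pi_pmf {..<n} False (\<lambda>i. bernoulli_pmf (\<sigma> i (s i))) \<bind> (\<lambda>a. return_pmf (\<omega>, s, a))))
     = Pi_pmf {..<n} False (\<lambda>i. bernoulli_pmf ?q) \<bind>
         (\<lambda>s. map_pmf (Pair \<omega>) (Pi_pmf {..<n} False (\<lambda>i. bernoulli_pmf (\<sigma> i (s i)))))"
    by (simp add: map_bind_pmf map_pmf_def[symmetric] pmf.map_comp o_def)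
  also have "\<dots> = map_pmf (Pair \<omega>) (Pi_pmf {..<n} False (\<lambda>i. bernoulli_pmf ?q) \<bind>
         (\<lambda>s. Pi_pmf {..<n} False (\<lambda>i. bernoulli_pmf (\<sigma> i (s i)))))"
    by (simp add: map_bind_pmf)
  also have "Pi_pmf {..<n} False (\<lambda>i. bernoulli_pmf ?q) \<bind>
         (\<lambda>s. Pi_pmf {..<n} False (\<lambda>i. bernoulli_pmf (\<sigma> i (s i))))
      = Pi_pmf {..<n} False (\<lambda>i. bind_pmf (bernoulli_pmf ?q) (\<lambda>x. bernoulli_pmf (\<sigma> i x)))"
    by (rule Pi_pmf_bind[symmetric]) simp
  also have "\<dots> = Pi_pmf {..<n} False (\<lambda>j. bernoulli_pmf (mixr p \<omega> (\<sigma> j)))"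
    by (rule Pi_pmf_cong) (use st q in \<open>auto simp: bern_bind mixr_def\<close>)
  finally show ?case by (simp add: map_bind_pmf)
qed

lemma finite_set_Pi_pmf: "finite A \<Longrightarrow> finite (set_pmf (Pi_pmf A (d::bool) (P :: _ \<Rightarrow> bool pmf)))"
  by (rule finite_subset[OF set_Pi_pmf_subset']) (auto intro!: finite_PiE_dflt)

lemma E_marg:
  fixes g :: "bool \<times> (nat \<Rightarrow> bool) \<Rightarrow> real"
  assumes p: "0 \<le> p" "p \<le> 1" and st: "\<forall>j<n. is_strategy (\<sigma> j)"
  shows "measure_pmf.expectation (game_pmf p n \<sigma>) (\<lambda>x. g (case x of (\<omega>,s,a) \<Rightarrow> (\<omega>,a))) =
    1/2 * measure_pmf.expectation (Pi_pmf {..<n} False (\<lambda>j. bernoulli_pmf (mixr p True (\<sigma> j)))) (\<lambda>a. g (True,a))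
  + 1/2 * measure_pmf.expectation (Pi_pmf {..<n} False (\<lambda>j. bernoulli_pmf (mixr p False (\<sigma> j)))) (\<lambda>a. g (False,a))"
proof -
  have "measure_pmf.expectation (game_pmf p n \<sigma>) (\<lambda>x. g (case x of (\<omega>,s,a) \<Rightarrow> (\<omega>,a)))
      = measure_pmf.expectation (map_pmf (\<lambda>(\<omega>,s,a). (\<omega>,a)) (game_pmf p n \<sigma>)) g"
    by (simp add: case_prod_beta)
  also have "\<dots> = measure_pmf.expectation (bind_pmf (bernoulli_pmf (1/2)) (\<lambda>\<omega>. map_pmf (Pair \<omega>)
        (Pi_pmf {..<n} False (\<lambda>j. bernoulli_pmf (mixr p \<omega> (\<sigma> j)))))) g"
    by (simp only: game_marg[OF p st])
  also have "\<dots> = (\<Sum>\<omega>\<in>UNIV. pmf (bernoulli_pmf (1/2)) \<omega> *\<^sub>R measure_pmf.expectation (map_pmf (Pair \<omega>)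
        (Pi_pmf {..<n} False (\<lambda>j. bernoulli_pmf (mixr p \<omega> (\<sigma> j))))) g)"
    by (rule pmf_expectation_bind) (auto intro: finite_set_Pi_pmf)
  also have "\<dots> = 1/2 * measure_pmf.expectation (Pi_pmf {..<n} False (\<lambda>j. bernoulli_pmf (mixr p True (\<sigma> j)))) (\<lambda>a. g (True,a))
  + 1/2 * measure_pmf.expectation (Pi_pmf {..<n} False (\<lambda>j. bernoulli_pmf (mixr p False (\<sigma> j)))) (\<lambda>a. g (False,a))"
    by (simp add: UNIV_bool)
  finally show ?thesis .
qed

lemma E_binom:
  fixes h :: "nat \<Rightarrow> real"
  assumes "finite S" "0 \<le> c" "c \<le> 1"
  shows "measure_pmf.expectation (Pi_pmf S False (\<lambda>_. bernoulli_pmf c)) (\<lambda>a. h (card {j\<in>S. a j}))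
     = (\<Sum>k\<le>card S. pmf (binomial_pmf (card S) c) k * h k)"
proof -
  have "binomial_pmf (card S) c = map_pmf (\<lambda>f. card {x\<in>S. f x}) (Pi_pmf S False (\<lambda>_. bernoulli_pmf c))"
    by (rule binomial_pmf_altdef') (use assms in auto)
  hence "measure_pmf.expectation (Pi_pmf S False (\<lambda>_. bernoulli_pmf c)) (\<lambda>a. h (card {j\<in>S. a j}))
      = measure_pmf.expectation (binomial_pmf (card S) c) h" by simp
  also have "\<dots> = (\<Sum>k\<le>card S. pmf (binomial_pmf (card S) c) k *\<^sub>R h k)"
    by (rule integral_measure_pmf) (use assms in \<open>auto simp: set_pmf_binomial_eq split: if_splits\<close>)
  finally show ?thesis by simp
qed

lemma sum_binom_ind:
  assumes "0 \<le> c" "c \<le> 1"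
  shows "(\<Sum>k\<le>n. pmf (binomial_pmf n c) k * (if B \<le> k then 1 else 0)) = bt n c B"
proof -
  have "(\<Sum>k\<le>n. pmf (binomial_pmf n c) k * (if B \<le> k then 1 else 0)) =
        (\<Sum>k\<le>n. if B \<le> k then pmf (binomial_pmf n c) k else 0)"
    by (rule sum.cong) auto
  also have "\<dots> = (\<Sum>k\<in>{k\<in>{..n}. B \<le> k}. pmf (binomial_pmf n c) k)"
    by (rule sum.inter_filter[symmetric]) simp
  also have "{k\<in>{..n}. B \<le> k} = {B..n}" by auto
  finally show ?thesis using assms unfolding bt_def by simp
qed

lemma sum_binom_one:
  assumes "0 \<le> c" "c \<le> 1"
  shows "(\<Sum>k\<le>n. pmf (binomial_pmf n c) k) = 1"
  using sum_binom_ind[OF assms, of n 0] bt_0[of n c] by simp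

lemma E_player:
  fixes h :: "nat \<Rightarrow> real" and S :: "nat set" and i :: nat and P :: "nat \<Rightarrow> bool pmf"
  assumes S: "finite S" "i \<in> S" and Pi: "P i = bernoulli_pmf ci" and Pj: "\<forall>j\<in>S-{i}. P j = bernoulli_pmf c"
    and c: "0 \<le> c" "c \<le> 1" "0 \<le> ci" "ci \<le> 1"
  shows "measure_pmf.expectation (Pi_pmf S False P) (\<lambda>a. if a i then h (card {j\<in>S. a j}) else 0)
      = ci * (\<Sum>k\<le>card S - 1. pmf (binomial_pmf (card S - 1) c) k * h (Suc k))"
proof -
  define S' where "S' = S - {i}"
  have S': "S = insert i S'" "i \<notin> S'" "finite S'" "card S' = card S - 1" using S unfolding S'_def by auto
  have PS': "Pi_pmf S' False P = Pi_pmf S' False (\<lambda>_. bernoulli_pmf c)"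
    by (rule Pi_pmf_cong) (use Pj in \<open>auto simp: S'_def\<close>)
  let ?F = "\<lambda>a. if a i then h (card {j\<in>S. a j}) else 0"
  have card_upd: "card {j\<in>S. (f(i:=True)) j} = Suc (card {j\<in>S'. f j})" for f :: "nat \<Rightarrow> bool"
  proof -
    have "{j\<in>S. (f(i:=True)) j} = insert i {j\<in>S'. f j}" using S' by auto
    thus ?thesis using S' by simp
  qed
  have "measure_pmf.expectation (Pi_pmf S False P) ?F =
      measure_pmf.expectation (map_pmf (\<lambda>(y,f). f(i:=y)) (pair_pmf (P i) (Pi_pmf S' False P))) ?F"
    unfolding S'(1) by (subst Pi_pmf_insert) (use S' in auto)
  also have "\<dots> = measure_pmf.expectation (pair_pmf (P i) (Pi_pmf S' False P))
        (\<lambda>(y,f). if y then h (Suc (card {j\<in>S'. f j})) else 0)"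
  proof -
    have "(\<lambda>x. ?F ((\<lambda>(y,f). f(i:=y)) x)) = (\<lambda>(y,f). if y then h (Suc (card {j\<in>S'. f j})) else 0)"
    proof (rule ext)
      fix x :: "bool \<times> (nat \<Rightarrow> bool)"
      obtain y f where x: "x = (y,f)" by (cases x)
      show "?F ((\<lambda>(y,f). f(i:=y)) x) = (\<lambda>(y,f). if y then h (Suc (card {j\<in>S'. f j})) else 0) x"
        using card_upd[of f] unfolding x by (cases y) auto
    qed
    thus ?thesis by simp
  qed
  also have "\<dots> = (\<Sum>y\<in>UNIV. pmf (P i) y *\<^sub>R measure_pmf.expectation
        (bind_pmf (Pi_pmf S' False P) (\<lambda>f. return_pmf (y,f)))
        (\<lambda>(y,f). if y then h (Suc (card {j\<in>S'. f j})) else 0))"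
    unfolding pair_pmf_def
    by (rule pmf_expectation_bind) (auto intro: finite_set_Pi_pmf S')
  also have "\<dots> = ci * measure_pmf.expectation (Pi_pmf S' False (\<lambda>_. bernoulli_pmf c))
        (\<lambda>f. h (Suc (card {j\<in>S'. f j})))"
    using c by (simp add: UNIV_bool Pi PS' map_pmf_def[symmetric])
  also have "\<dots> = ci * (\<Sum>k\<le>card S - 1. pmf (binomial_pmf (card S - 1) c) k * h (Suc k))"
    using E_binom[OF S'(3) c(1,2), of "\<lambda>k. h (Suc k)"] S'(4) by simp
  finally show ?thesis .
qed

lemma num_contrib_eq: "num_contrib n a = card {j\<in>{..<n}. a j}"
  unfolding num_contrib_def by (rule arg_cong[where f=card]) auto

lemma strat_upd: "is_strategy f \<Longrightarrow> is_strategy \<tau> \<Longrightarrow> \<forall>j<n. is_strategy (((\<lambda>_. f)(i:=\<tau>)) j)"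
  by auto

lemma E_sym_player:
  assumes p: "0 \<le> p" "p \<le> 1" and f: "is_strategy f" and t: "is_strategy \<tau>" and i: "i < n" and B: "1 \<le> B"
  shows "measure_pmf.expectation (Pi_pmf {..<n} False (\<lambda>j. bernoulli_pmf (mixr p \<omega> (((\<lambda>_. f)(i:=\<tau>)) j))))
      (\<lambda>a. if a i then (if B \<le> num_contrib n a then v else 0) else 0)
    = v * mixr p \<omega> \<tau> * bt (n-1) (mixr p \<omega> f) (B-1)"
proof -
  have mf: "0 \<le> mixr p \<omega> f" "mixr p \<omega> f \<le> 1" using mixr_01[OF p f] by auto
  have mt: "0 \<le> mixr p \<omega> \<tau>" "mixr p \<omega> \<tau> \<le> 1" using mixr_01[OF p t] by auto
  have "measure_pmf.expectation (Pi_pmf {..<n} False (\<lambda>j. bernoulli_pmf (mixr p \<omega> (((\<lambda>_. f)(i:=\<tau>)) j))))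
      (\<lambda>a. if a i then (\<lambda>k. if B \<le> k then v else 0) (card {j\<in>{..<n}. a j}) else 0)
    = mixr p \<omega> \<tau> * (\<Sum>k\<le>card {..<n} - 1. pmf (binomial_pmf (card {..<n} - 1) (mixr p \<omega> f)) k *
         (\<lambda>k. if B \<le> k then v else 0) (Suc k))"
    by (rule E_player) (use i mf mt in auto)
  also have "(\<Sum>k\<le>card {..<n} - 1. pmf (binomial_pmf (card {..<n} - 1) (mixr p \<omega> f)) k *
         (\<lambda>k. if B \<le> k then v else 0) (Suc k))
     = v * (\<Sum>k\<le>n - 1. pmf (binomial_pmf (n - 1) (mixr p \<omega> f)) k * (if B - 1 \<le> k then 1 else 0))"
    unfolding sum_distrib_left using B by (intro sum.cong) auto
  also have "\<dots> = v * bt (n-1) (mixr p \<omega> f) (B-1)" using sum_binom_ind[OF mf] by simp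
  finally show ?thesis unfolding num_contrib_eq by (simp add: mult_ac)
qed

lemma payoff_formula:
  assumes p: "0 \<le> p" "p \<le> 1" and f: "is_strategy f" and t: "is_strategy \<tau>" and i: "i < n" and B: "1 \<le> B"
  shows "exp_payoff p B n ((\<lambda>_. f)(i:=\<tau>)) i =
     1/2 * (mixr p True \<tau> * bt (n-1) (mixr p True f) (B-1))
   - 1/2 * (mixr p False \<tau> * bt (n-1) (mixr p False f) (B-1))"
proof -
  define g where "g = (\<lambda>(\<omega>::bool, a::nat\<Rightarrow>bool). if a i then (if B \<le> num_contrib n a then (if \<omega> then 1 else -1::real) else 0) else 0)"
  have pe: "payoff B n i = (\<lambda>x. g (case x of (\<omega>,s,a) \<Rightarrow> (\<omega>,a)))"
    unfolding payoff_def g_def by (auto simp: fun_eq_iff)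
  show ?thesis
    unfolding exp_payoff_def pe E_marg[OF p strat_upd[OF f t]]
    using E_sym_player[OF p f t i B, of True 1] E_sym_player[OF p f t i B, of False "-1"]
    by (simp add: g_def)
qed

lemma E_sym_count:
  assumes p: "0 \<le> p" "p \<le> 1" and f: "is_strategy f"
  shows "measure_pmf.expectation (Pi_pmf {..<n} False (\<lambda>j. bernoulli_pmf (mixr p \<omega> f)))
      (\<lambda>a. if B \<le> num_contrib n a then 1 else 0) = bt n (mixr p \<omega> f) B"
proof -
  have mf: "0 \<le> mixr p \<omega> f" "mixr p \<omega> f \<le> 1" using mixr_01[OF p f] by auto
  have "measure_pmf.expectation (Pi_pmf {..<n} False (\<lambda>j. bernoulli_pmf (mixr p \<omega> f)))
      (\<lambda>a. (\<lambda>k. if B \<le> k then 1 else 0) (card {j\<in>{..<n}. a j})) =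
      (\<Sum>k\<le>card {..<n}. pmf (binomial_pmf (card {..<n}) (mixr p \<omega> f)) k * (\<lambda>k. if B \<le> k then 1 else 0) k)"
    by (rule E_binom) (use mf in auto)
  thus ?thesis using sum_binom_ind[OF mf, of n B] by (simp add: num_contrib_eq)
qed

lemma E_sym_count_lt:
  assumes p: "0 \<le> p" "p \<le> 1" and f: "is_strategy f"
  shows "measure_pmf.expectation (Pi_pmf {..<n} False (\<lambda>j. bernoulli_pmf (mixr p \<omega> f)))
      (\<lambda>a. if num_contrib n a < B then 1 else 0) = 1 - bt n (mixr p \<omega> f) B"
proof -
  have mf: "0 \<le> mixr p \<omega> f" "mixr p \<omega> f \<le> 1" using mixr_01[OF p f] by auto
  have "measure_pmf.expectation (Pi_pmf {..<n} False (\<lambda>j. bernoulli_pmf (mixr p \<omega> f)))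
      (\<lambda>a. (\<lambda>k. if k < B then 1 else 0) (card {j\<in>{..<n}. a j})) =
      (\<Sum>k\<le>card {..<n}. pmf (binomial_pmf (card {..<n}) (mixr p \<omega> f)) k * (\<lambda>k. if k < B then 1 else 0) k)"
    by (rule E_binom) (use mf in auto)
  also have "\<dots> = (\<Sum>k\<le>n. pmf (binomial_pmf n (mixr p \<omega> f)) k) -
      (\<Sum>k\<le>n. pmf (binomial_pmf n (mixr p \<omega> f)) k * (if B \<le> k then 1 else 0))"
    by (simp add: sum_subtractf[symmetric] not_le[symmetric] cong: if_cong) (intro sum.cong, auto)
  also have "\<dots> = 1 - bt n (mixr p \<omega> f) B" using sum_binom_ind[OF mf, of n B] sum_binom_one[OF mf] by simp
  finally show ?thesis by (simp add: num_contrib_eq)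
qed

lemma prob_as_E:
  "measure_pmf.prob M X = measure_pmf.expectation M (\<lambda>x. if x \<in> X then 1 else 0::real)"
proof -
  have "(\<lambda>x. if x \<in> X then 1 else 0::real) = indicator X" by (auto simp: indicator_def fun_eq_iff)
  thus ?thesis by simp
qed

lemma prob_nontriv:
  assumes p: "0 \<le> p" "p \<le> 1" and f: "is_strategy f"
  shows "measure_pmf.prob (game_pmf p n (\<lambda>_. f)) {(\<omega>, s, a). num_contrib n a \<ge> B}
     = 1/2 * bt n (mixr p True f) B + 1/2 * bt n (mixr p False f) B"
proof -
  have st: "\<forall>j<n. is_strategy ((\<lambda>_. f) j)" using f by simp
  define G :: "bool \<times> (nat \<Rightarrow> bool) \<Rightarrow> real" where "G = (\<lambda>(\<omega>,a). if B \<le> num_contrib n a then 1 else 0)"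
  have eq: "(\<lambda>x. if x \<in> {(\<omega>, s, a). num_contrib n a \<ge> B} then 1 else 0::real)
      = (\<lambda>x. G (case x of (\<omega>,s,a) \<Rightarrow> (\<omega>,a)))"
    by (auto simp: fun_eq_iff G_def)
  show ?thesis
    unfolding prob_as_E eq E_marg[OF p st] using E_sym_count[OF p f] by (simp add: G_def)
qed

lemma prob_H_win:
  assumes p: "0 \<le> p" "p \<le> 1" and f: "is_strategy f"
  shows "measure_pmf.prob (game_pmf p n (\<lambda>_. f)) {(\<omega>, s, a). \<omega> \<and> num_contrib n a \<ge> B}
     = 1/2 * bt n (mixr p True f) B"
proof -
  have st: "\<forall>j<n. is_strategy ((\<lambda>_. f) j)" using f by simp
  define G :: "bool \<times> (nat \<Rightarrow> bool) \<Rightarrow> real" where "G = (\<lambda>(\<omega>,a). if \<omega> \<and> B \<le> num_contrib n a then 1 else 0)"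
  have eq: "(\<lambda>x. if x \<in> {(\<omega>, s, a). \<omega> \<and> num_contrib n a \<ge> B} then 1 else 0::real)
      = (\<lambda>x. G (case x of (\<omega>,s,a) \<Rightarrow> (\<omega>,a)))"
    by (auto simp: fun_eq_iff G_def)
  show ?thesis
    unfolding prob_as_E eq E_marg[OF p st] using E_sym_count[OF p f] by (simp add: G_def)
qed

lemma prob_L_lose:
  assumes p: "0 \<le> p" "p \<le> 1" and f: "is_strategy f"
  shows "measure_pmf.prob (game_pmf p n (\<lambda>_. f)) {(\<omega>, s, a). \<not> \<omega> \<and> num_contrib n a < B}
     = 1/2 * (1 - bt n (mixr p False f) B)"
proof -
  have st: "\<forall>j<n. is_strategy ((\<lambda>_. f) j)" using f by simp
  define G :: "bool \<times> (nat \<Rightarrow> bool) \<Rightarrow> real" where "G = (\<lambda>(\<omega>,a). if \<not> \<omega> \<and> num_contrib n a < B then 1 else 0)"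
  have eq: "(\<lambda>x. if x \<in> {(\<omega>, s, a). \<not> \<omega> \<and> num_contrib n a < B} then 1 else 0::real)
      = (\<lambda>x. G (case x of (\<omega>,s,a) \<Rightarrow> (\<omega>,a)))"
    by (auto simp: fun_eq_iff G_def)
  show ?thesis
    unfolding prob_as_E eq E_marg[OF p st] using E_sym_count_lt[OF p f] by (simp add: G_def)
qed

lemma prob_state:
  assumes p: "0 \<le> p" "p \<le> 1" and f: "is_strategy f"
  shows "measure_pmf.prob (game_pmf p n (\<lambda>_. f)) {(\<omega>, s, a). \<omega>} = 1/2"
    and "measure_pmf.prob (game_pmf p n (\<lambda>_. f)) {(\<omega>, s, a). \<not> \<omega>} = 1/2"
proof -
  have st: "\<forall>j<n. is_strategy ((\<lambda>_. f) j)" using f by simp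
  define G :: "bool \<times> (nat \<Rightarrow> bool) \<Rightarrow> real" where "G = (\<lambda>(\<omega>,a). if \<omega> then 1 else 0)"
  have eq: "(\<lambda>x. if x \<in> {(\<omega>, s, a). \<omega>} then 1 else 0::real)
      = (\<lambda>x. G (case x of (\<omega>,s,a) \<Rightarrow> (\<omega>,a)))"
    by (auto simp: fun_eq_iff G_def)
  show "measure_pmf.prob (game_pmf p n (\<lambda>_. f)) {(\<omega>, s, a). \<omega>} = 1/2"
    unfolding prob_as_E eq E_marg[OF p st]  by (simp add: G_def)
next
  have st: "\<forall>j<n. is_strategy ((\<lambda>_. f) j)" using f by simp
  define G :: "bool \<times> (nat \<Rightarrow> bool) \<Rightarrow> real" where "G = (\<lambda>(\<omega>,a). if \<not> \<omega> then 1 else 0)"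
  have eq: "(\<lambda>x. if x \<in> {(\<omega>, s, a). \<not> \<omega>} then 1 else 0::real)
      = (\<lambda>x. G (case x of (\<omega>,s,a) \<Rightarrow> (\<omega>,a)))"
    by (auto simp: fun_eq_iff G_def)
  show "measure_pmf.prob (game_pmf p n (\<lambda>_. f)) {(\<omega>, s, a). \<not> \<omega>} = 1/2"
    unfolding prob_as_E eq E_marg[OF p st]  by (simp add: G_def)
qed

lemma theta_formula:
  assumes p: "0 \<le> p" "p \<le> 1" and f: "is_strategy (sym_eq p B n)"
  shows "theta p B n = 1/2 * bt n (mixr p True (sym_eq p B n)) B + 1/2 * (1 - bt n (mixr p False (sym_eq p B n)) B)"
  unfolding theta_def Let_def prob_H_win[OF p f] prob_L_lose[OF p f] prob_state[OF p f] by simp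

definition gH :: "real \<Rightarrow> nat \<Rightarrow> nat \<Rightarrow> real \<Rightarrow> real \<Rightarrow> real" where
  "gH p m k h l = p * bt m (p*h + (1-p)*l) k - (1-p) * bt m ((1-p)*h + p*l) k"
definition gL :: "real \<Rightarrow> nat \<Rightarrow> nat \<Rightarrow> real \<Rightarrow> real \<Rightarrow> real" where
  "gL p m k h l = (1-p) * bt m (p*h + (1-p)*l) k - p * bt m ((1-p)*h + p*l) k"
definition phi :: "real \<Rightarrow> nat \<Rightarrow> nat \<Rightarrow> real \<Rightarrow> real" where
  "phi p m k l = (1-p) * bt m (p + (1-p)*l) k - p * bt m (1-p + p*l) k"
definition solL :: "real \<Rightarrow> nat \<Rightarrow> nat \<Rightarrow> real \<Rightarrow> bool" where
  "solL p m k l \<longleftrightarrow> (l = 0 \<and> phi p m k 0 \<le> 0) \<or> (0 < l \<and> l < 1 \<and> phi p m k l = 0)"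

lemma mixr_T: "mixr p True f = p * f True + (1-p) * f False" unfolding mixr_def by simp
lemma mixr_F: "mixr p False f = (1-p) * f True + p * f False" unfolding mixr_def by simp

lemma pay_lin:
  assumes p: "0 \<le> p" "p \<le> 1" and f: "is_strategy f" and t: "is_strategy \<tau>" and i: "i < n" and B: "1 \<le> B"
  shows "exp_payoff p B n ((\<lambda>_. f)(i:=\<tau>)) i =
     1/2 * (\<tau> True * gH p (n-1) (B-1) (f True) (f False) + \<tau> False * gL p (n-1) (B-1) (f True) (f False))"
  unfolding payoff_formula[OF assms] gH_def gL_def mixr_T mixr_F by (simp add: algebra_simps)

lemma BNE_iff:
  assumes p: "0 \<le> p" "p \<le> 1" and f: "is_strategy f" and B: "1 \<le> B" "B \<le> n"
  shows "is_BNE p B n (\<lambda>_. f) \<longleftrightarrow>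
    (\<forall>t u. 0 \<le> t \<longrightarrow> t \<le> 1 \<longrightarrow> 0 \<le> u \<longrightarrow> u \<le> 1 \<longrightarrow>
      t * gH p (n-1) (B-1) (f True) (f False) + u * gL p (n-1) (B-1) (f True) (f False)
      \<le> f True * gH p (n-1) (B-1) (f True) (f False) + f False * gL p (n-1) (B-1) (f True) (f False))"
  (is "_ \<longleftrightarrow> (\<forall>t u. ?C t u)")
proof
  have triv: "(\<lambda>_. f)(i := f) = (\<lambda>_. f)" for i :: nat by auto
  assume bne: "is_BNE p B n (\<lambda>_. f)"
  show "\<forall>t u. ?C t u"
  proof (intro allI impI)
    fix t u :: real assume tu: "0 \<le> t" "t \<le> 1" "0 \<le> u" "u \<le> 1"
    define \<tau> where "\<tau> = (\<lambda>s::bool. if s then t else u)"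
    have ts: "is_strategy \<tau>" unfolding is_strategy_def \<tau>_def using tu by auto
    have i: "0 < n" using B by simp
    have "exp_payoff p B n ((\<lambda>_. f)(0:=\<tau>)) 0 \<le> exp_payoff p B n (\<lambda>_. f) 0"
      using bne ts i unfolding is_BNE_def by blast
    also have "exp_payoff p B n (\<lambda>_. f) 0 = exp_payoff p B n ((\<lambda>_. f)(0:=f)) 0" by (simp only: triv)
    finally show "t * gH p (n-1) (B-1) (f True) (f False) + u * gL p (n-1) (B-1) (f True) (f False)
      \<le> f True * gH p (n-1) (B-1) (f True) (f False) + f False * gL p (n-1) (B-1) (f True) (f False)"
      unfolding pay_lin[OF p f ts i B(1)] pay_lin[OF p f f i B(1)] by (simp add: \<tau>_def)
  qed
next
  have triv: "(\<lambda>_. f)(i := f) = (\<lambda>_. f)" for i :: nat by auto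
  assume C: "\<forall>t u. ?C t u"
  show "is_BNE p B n (\<lambda>_. f)"
    unfolding is_BNE_def
  proof (intro conjI allI impI)
    fix i assume "i < n" thus "is_strategy ((\<lambda>_. f) i)" using f by simp
  next
    fix i \<tau> assume i: "i < n" and ts: "is_strategy \<tau>"
    have "?C (\<tau> True) (\<tau> False)" using C by blast
    moreover have "0 \<le> \<tau> True" "\<tau> True \<le> 1" "0 \<le> \<tau> False" "\<tau> False \<le> 1" using ts unfolding is_strategy_def by auto
    ultimately have "\<tau> True * gH p (n-1) (B-1) (f True) (f False) + \<tau> False * gL p (n-1) (B-1) (f True) (f False)
      \<le> f True * gH p (n-1) (B-1) (f True) (f False) + f False * gL p (n-1) (B-1) (f True) (f False)" by blast
    thus "exp_payoff p B n ((\<lambda>_. f)(i:=\<tau>)) i \<le> exp_payoff p B n (\<lambda>_. f) i"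
      using pay_lin[OF p f ts i B(1)] pay_lin[OF p f f i B(1)] triv[of i] by simp
  qed
qed

lemma lin_opt:
  fixes G x :: real
  assumes "0 \<le> x" "x \<le> 1"
  shows "(\<forall>t. 0 \<le> t \<longrightarrow> t \<le> 1 \<longrightarrow> t * G \<le> x * G) \<longleftrightarrow> ((G > 0 \<longrightarrow> x = 1) \<and> (G < 0 \<longrightarrow> x = 0))"
proof
  assume a: "\<forall>t. 0 \<le> t \<longrightarrow> t \<le> 1 \<longrightarrow> t * G \<le> x * G"
  have 1: "1 * G \<le> x * G" using a[rule_format, of 1] by simp
  have 0: "0 * G \<le> x * G" using a[rule_format, of 0] by simp
  show "(G > 0 \<longrightarrow> x = 1) \<and> (G < 0 \<longrightarrow> x = 0)"
  proof (intro conjI impI)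
    assume "G > 0" thus "x = 1" using 1 assms by (simp add: mult_le_cancel_right)
  next
    assume G: "G < 0"
    have "x * G \<le> 0" using assms G by (simp add: mult_nonneg_nonpos)
    hence "x * G = 0" using 0 by simp
    thus "x = 0" using G by simp
  qed
next
  assume a: "(G > 0 \<longrightarrow> x = 1) \<and> (G < 0 \<longrightarrow> x = 0)"
  show "\<forall>t. 0 \<le> t \<longrightarrow> t \<le> 1 \<longrightarrow> t * G \<le> x * G"
  proof (intro allI impI)
    fix t :: real assume t: "0 \<le> t" "t \<le> 1"
    consider "G > 0" | "G < 0" | "G = 0" by linarith
    thus "t * G \<le> x * G"
    proof cases
      case 1 thus ?thesis using a t by (simp add: mult_le_cancel_right)
    next
      case 2 thus ?thesis using a t by (simp add: mult_le_0_iff)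
    qed simp
  qed
qed

lemma BNE_iff2:
  assumes p: "0 \<le> p" "p \<le> 1" and f: "is_strategy f" and B: "1 \<le> B" "B \<le> n"
  shows "is_BNE p B n (\<lambda>_. f) \<longleftrightarrow>
    ((gH p (n-1) (B-1) (f True) (f False) > 0 \<longrightarrow> f True = 1) \<and> (gH p (n-1) (B-1) (f True) (f False) < 0 \<longrightarrow> f True = 0) \<and>
     (gL p (n-1) (B-1) (f True) (f False) > 0 \<longrightarrow> f False = 1) \<and> (gL p (n-1) (B-1) (f True) (f False) < 0 \<longrightarrow> f False = 0))"
proof -
  define GH where "GH = gH p (n-1) (B-1) (f True) (f False)"
  define GL where "GL = gL p (n-1) (B-1) (f True) (f False)"
  have h: "0 \<le> f True" "f True \<le> 1" and l: "0 \<le> f False" "f False \<le> 1" using f unfolding is_strategy_def by auto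
  have "(\<forall>t u. 0 \<le> t \<longrightarrow> t \<le> 1 \<longrightarrow> 0 \<le> u \<longrightarrow> u \<le> 1 \<longrightarrow> t * GH + u * GL \<le> f True * GH + f False * GL)
    \<longleftrightarrow> (\<forall>t. 0 \<le> t \<longrightarrow> t \<le> 1 \<longrightarrow> t * GH \<le> f True * GH) \<and> (\<forall>u. 0 \<le> u \<longrightarrow> u \<le> 1 \<longrightarrow> u * GL \<le> f False * GL)"
  proof
    assume a: "\<forall>t u. 0 \<le> t \<longrightarrow> t \<le> 1 \<longrightarrow> 0 \<le> u \<longrightarrow> u \<le> 1 \<longrightarrow> t * GH + u * GL \<le> f True * GH + f False * GL"
    show "(\<forall>t. 0 \<le> t \<longrightarrow> t \<le> 1 \<longrightarrow> t * GH \<le> f True * GH) \<and> (\<forall>u. 0 \<le> u \<longrightarrow> u \<le> 1 \<longrightarrow> u * GL \<le> f False * GL)"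
    proof (intro conjI allI impI)
      fix t :: real assume "0 \<le> t" "t \<le> 1" thus "t * GH \<le> f True * GH" using a[rule_format, of t "f False"] l by simp
    next
      fix u :: real assume "0 \<le> u" "u \<le> 1" thus "u * GL \<le> f False * GL" using a[rule_format, of "f True" u] h by simp
    qed
  qed (auto intro: add_mono)
  thus ?thesis unfolding BNE_iff[OF assms] GH_def[symmetric] GL_def[symmetric] lin_opt[OF h] lin_opt[OF l] by simp
qed

lemma bt_zero: "1 \<le> k \<Longrightarrow> bt m 0 k = 0"
  unfolding bt_def by (intro sum.neutral) auto

lemma phi_cont: "continuous_on A (phi p m k)"
  unfolding phi_def bt_def by (intro continuous_intros)

lemma phi_one: "k \<le> m \<Longrightarrow> phi p m k 1 = 1 - 2*p"
  unfolding phi_def using bt_one by simp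

lemma sol_exists:
  assumes p: "1/2 < p" "p < 1" and k: "k \<le> m"
  shows "\<exists>l. solL p m k l"
proof (cases "phi p m k 0 \<le> 0")
  case True thus ?thesis unfolding solL_def by auto
next
  case False
  have "\<exists>x\<ge>0. x \<le> 1 \<and> phi p m k x = 0"
    by (rule IVT2) (use False phi_one[OF k, of p] p phi_cont[of UNIV p m k] in \<open>auto simp: continuous_on_eq_continuous_at\<close>)
  then obtain x where x: "0 \<le> x" "x \<le> 1" "phi p m k x = 0" by blast
  have "x \<noteq> 0" using x False by auto
  moreover have "x \<noteq> 1" using x phi_one[OF k, of p] p by auto
  ultimately show ?thesis using x unfolding solL_def by (intro exI[of _ x]) auto
qed

lemma sol_unique:
  assumes p: "1/2 < p" "p < 1" and k: "k \<le> m" and s: "solL p m k l1" "solL p m k l2"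
  shows "l1 = l2"
proof (cases "k = 0")
  case True
  have "phi p m k l = 1 - 2*p" for l unfolding phi_def True bt_0 by simp
  thus ?thesis using s p unfolding solL_def by auto
next
  case False
  hence k1: "1 \<le> k" by simp
  have no: False if l: "l1 < l2" "solL p m k l1" "solL p m k l2" for l1 l2
  proof -
    have l2: "0 < l2" "l2 < 1" "phi p m k l2 = 0" using l unfolding solL_def by auto
    have l1: "0 \<le> l1" "phi p m k l1 \<le> 0" using l unfolding solL_def by auto
    let ?A1 = "bt m (p + (1-p)*l1) k" and ?A2 = "bt m (p + (1-p)*l2) k"
    let ?B1 = "bt m (1-p + p*l1) k" and ?B2 = "bt m (1-p + p*l2) k"
    have strict: "?A2 * ?B1 < ?A1 * ?B2" by (rule ratio_decr[OF k1 k p l1(1) l(1) l2(2)])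
    have e2: "p * ?B2 = (1-p) * ?A2" using l2(3) unfolding phi_def by simp
    have i1: "(1-p) * ?A1 \<le> p * ?B1" using l1(2) unfolding phi_def by simp
    have A2: "0 \<le> ?A2"
    proof -
      have "0 \<le> (1-p)*l2" "(1-p)*l2 \<le> 1-p" using l2 p by (auto intro: mult_left_le)
      thus ?thesis using p by (intro bt_nonneg) linarith+
    qed
    have "p * (?A1 * ?B2) = ?A1 * (p * ?B2)" by (simp only: mult_ac)
    also have "\<dots> = ?A1 * ((1-p) * ?A2)" by (simp only: e2)
    also have "\<dots> = ((1-p) * ?A1) * ?A2" by (simp only: mult_ac)
    also have "\<dots> \<le> (p * ?B1) * ?A2" by (rule mult_right_mono[OF i1 A2])
    also have "\<dots> = p * (?A2 * ?B1)" by (simp only: mult_ac)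
    finally have "p * (?A1 * ?B2) \<le> p * (?A2 * ?B1)" .
    hence "?A1 * ?B2 \<le> ?A2 * ?B1" using p by simp
    thus False using strict by simp
  qed
  show ?thesis
  proof (rule ccontr)
    assume "l1 \<noteq> l2"
    hence "l1 < l2 \<or> l2 < l1" by auto
    thus False using no s by blast
  qed
qed

lemma gL_phi: "gL p m k 1 l = phi p m k l"
  unfolding gL_def phi_def by simp

lemma char:
  assumes p: "1/2 < p" "p < 1" and B: "1 \<le> B" "B \<le> n"
  shows "(is_strategy f \<and> is_BNE p B n (\<lambda>_. f) \<and> nontrivial p B n (\<lambda>_. f)) \<longleftrightarrow>
         (f True = 1 \<and> solL p (n-1) (B-1) (f False))"
proof -
  have p01: "0 \<le> p" "p \<le> 1" using p by auto
  have k: "B - 1 \<le> n - 1" using B by simp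
  show ?thesis
  proof
    assume P: "is_strategy f \<and> is_BNE p B n (\<lambda>_. f) \<and> nontrivial p B n (\<lambda>_. f)"
    hence f: "is_strategy f" by simp
    define h where "h = f True"
    define l where "l = f False"
    have h01: "0 \<le> h" "h \<le> 1" and l01: "0 \<le> l" "l \<le> 1" using f unfolding is_strategy_def h_def l_def by auto
    define a where "a = p*h + (1-p)*l"
    define b where "b = (1-p)*h + p*l"
    have ab: "0 \<le> a" "a \<le> 1" "0 \<le> b" "b \<le> 1"
      unfolding a_def b_def using convex01[OF p01 h01 l01] convex01[of "1-p" h l] p01 h01 l01 by auto
    let ?Qa = "bt (n-1) a (B-1)" and ?Qb = "bt (n-1) b (B-1)"
    have GH: "gH p (n-1) (B-1) h l = p * ?Qa - (1-p) * ?Qb" unfolding gH_def a_def b_def by simp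
    have GL: "gL p (n-1) (B-1) h l = (1-p) * ?Qa - p * ?Qb" unfolding gL_def a_def b_def by simp
    have bne: "(gH p (n-1) (B-1) h l > 0 \<longrightarrow> h = 1) \<and> (gH p (n-1) (B-1) h l < 0 \<longrightarrow> h = 0) \<and>
     (gL p (n-1) (B-1) h l > 0 \<longrightarrow> l = 1) \<and> (gL p (n-1) (B-1) h l < 0 \<longrightarrow> l = 0)"
      using P BNE_iff2[OF p01 f B] unfolding h_def l_def by simp
    have nt: "\<not> (h = 0 \<and> l = 0)"
    proof
      assume "h = 0 \<and> l = 0"
      hence "mixr p True f = 0" "mixr p False f = 0" unfolding mixr_T mixr_F h_def l_def by auto
      hence "measure_pmf.prob (game_pmf p n (\<lambda>_. f)) {(\<omega>, s, a). num_contrib n a \<ge> B} = 0"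
        unfolding prob_nontriv[OF p01 f] using bt_zero[OF B(1)] by simp
      thus False using P unfolding nontrivial_def by simp
    qed
    have Qb0: "0 \<le> ?Qb" using ab by (intro bt_nonneg) auto
    show "f True = 1 \<and> solL p (n-1) (B-1) (f False)"
    proof (cases "l = 0")
      case False
      hence lpos: "0 < l" using l01 by simp
      have "0 < (1-p)*l" using lpos p by simp
      moreover have "0 \<le> p*h" using h01 p by simp
      ultimately have apos: "0 < a" unfolding a_def by linarith
      have Qa: "0 < ?Qa" using bt_pos[OF apos ab(2) k] .
      have gL0: "gL p (n-1) (B-1) h l \<ge> 0"
      proof (rule ccontr)
        assume "\<not> gL p (n-1) (B-1) h l \<ge> 0"
        hence "gL p (n-1) (B-1) h l < 0" by simp
        hence "l = 0" using bne by blast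
        thus False using False by simp
      qed
      have "gH p (n-1) (B-1) h l - gL p (n-1) (B-1) h l = (2*p-1) * (?Qa + ?Qb)"
        unfolding GH GL by (simp add: algebra_simps)
      moreover have "(2*p-1) * (?Qa + ?Qb) > 0" using p Qa Qb0 by simp
      ultimately have "gH p (n-1) (B-1) h l > 0" using gL0 by linarith
      hence h1: "h = 1" using bne by blast
      have l1: "l \<noteq> 1"
      proof
        assume "l = 1"
        hence "a = 1" "b = 1" unfolding a_def b_def h1 by auto
        hence "gL p (n-1) (B-1) h l = 1 - 2*p" unfolding GL using bt_one[OF k] by simp
        thus False using gL0 p by simp
      qed
      have "\<not> gL p (n-1) (B-1) h l > 0" using bne l1 by blast
      hence "gL p (n-1) (B-1) h l = 0" using gL0 by simp
      hence "gL p (n-1) (B-1) 1 l = 0" unfolding h1 .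
      hence phi0: "phi p (n-1) (B-1) l = 0" unfolding gL_phi .
      have "f True = 1" using h1 unfolding h_def .
      moreover have "0 < f False" "f False < 1" using lpos l1 l01 unfolding l_def by auto
      ultimately show ?thesis unfolding solL_def using phi0 by (simp add: l_def)
    next
      case True
      hence hpos: "0 < h" using nt h01 by auto
      have "a = p*h" "b = (1-p)*h" unfolding a_def b_def True by auto
      have bpos: "0 < b" unfolding \<open>b = (1-p)*h\<close> using hpos p by simp
      have Qb: "0 < ?Qb" using bt_pos[OF bpos ab(4) k] .
      have "b \<le> a" unfolding \<open>a = p*h\<close> \<open>b = (1-p)*h\<close> using hpos p by (intro mult_right_mono) auto
      hence "?Qb \<le> ?Qa" using ab(3) ab(2) bt_mono by blast
      hence "p * ?Qb \<le> p * ?Qa" using p by (intro mult_left_mono) auto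
      moreover have "(2*p-1) * ?Qb = p * ?Qb - (1-p) * ?Qb" by (simp add: algebra_simps)
      ultimately have "gH p (n-1) (B-1) h l \<ge> (2*p-1) * ?Qb" unfolding GH by linarith
      moreover have "(2*p-1) * ?Qb > 0" using Qb p by simp
      ultimately have "gH p (n-1) (B-1) h l > 0" by linarith
      hence h1: "h = 1" using bne by blast
      have gL0: "gL p (n-1) (B-1) h l \<le> 0"
      proof (rule ccontr)
        assume "\<not> gL p (n-1) (B-1) h l \<le> 0"
        hence "gL p (n-1) (B-1) h l > 0" by simp
        hence "l = 1" using bne by blast
        thus False using True by simp
      qed
      have "gL p (n-1) (B-1) 1 0 \<le> 0" using gL0 unfolding h1 True .
      hence phi0: "phi p (n-1) (B-1) 0 \<le> 0" unfolding gL_phi .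
      have "f True = 1" using h1 unfolding h_def .
      moreover have "f False = 0" using True unfolding l_def .
      ultimately show ?thesis unfolding solL_def using phi0 by simp
    qed
  next
    assume S: "f True = 1 \<and> solL p (n-1) (B-1) (f False)"
    define l where "l = f False"
    have l: "0 \<le> l" "l < 1" using S unfolding solL_def l_def by auto
    have f: "is_strategy f" unfolding is_strategy_def
    proof
      fix s show "0 \<le> f s \<and> f s \<le> 1" using S l by (cases s) (auto simp: l_def)
    qed
    define a where "a = p + (1-p)*l"
    define b where "b = 1-p + p*l"
    have pl1: "0 \<le> (1-p)*l" using l p by simp
    have pl2: "(1-p)*l \<le> 1-p" by (rule mult_left_le) (use l p in auto)
    have pl3: "0 \<le> p*l" using l p by simp
    have pl4: "p*l \<le> p" by (rule mult_left_le) (use l p in auto)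
    have pl5: "(2*p-1)*l \<le> 2*p-1" by (rule mult_left_le) (use l p in auto)
    have ab1: "0 < a" "a \<le> 1" "0 \<le> b" "b \<le> 1" unfolding a_def b_def using pl1 pl2 pl3 pl4 p by linarith+
    have "b - a = (2*p-1)*l - (2*p-1)" unfolding a_def b_def by (simp add: algebra_simps)
    hence "b \<le> a" using pl5 by linarith
    note ab = ab1 this
    let ?Qa = "bt (n-1) a (B-1)" and ?Qb = "bt (n-1) b (B-1)"
    have Qa: "0 < ?Qa" using bt_pos[OF ab(1,2) k] .
    have Qba: "?Qb \<le> ?Qa" by (rule bt_mono[OF ab(3) ab(5) ab(2)])
    have GH: "gH p (n-1) (B-1) 1 l = p * ?Qa - (1-p) * ?Qb" unfolding gH_def a_def b_def by simp
    have "(1-p) * ?Qb \<le> (1-p) * ?Qa" using Qba p by (intro mult_left_mono) auto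
    moreover have "(2*p-1) * ?Qa = p * ?Qa - (1-p) * ?Qa" by (simp add: algebra_simps)
    ultimately have "gH p (n-1) (B-1) 1 l \<ge> (2*p-1) * ?Qa" unfolding GH by linarith
    moreover have "(2*p-1) * ?Qa > 0" using Qa p by simp
    ultimately have gHpos: "gH p (n-1) (B-1) 1 l > 0" by linarith
    have fT: "f True = 1" using S by simp
    have fF: "f False = l" unfolding l_def ..
    have eL: "gL p (n-1) (B-1) (f True) (f False) = phi p (n-1) (B-1) l" unfolding fT fF gL_phi ..
    have eH: "gH p (n-1) (B-1) (f True) (f False) > 0" unfolding fT fF by (rule gHpos)
    have sl: "(l = 0 \<and> phi p (n-1) (B-1) 0 \<le> 0) \<or> (0 < l \<and> l < 1 \<and> phi p (n-1) (B-1) l = 0)"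
      using S unfolding solL_def l_def by simp
    have c3: "\<not> phi p (n-1) (B-1) l > 0" using sl by auto
    have c4: "phi p (n-1) (B-1) l < 0 \<longrightarrow> l = 0" using sl by auto
    have bne: "is_BNE p B n (\<lambda>_. f)"
      unfolding BNE_iff2[OF p01 f B] eL using eH fT fF c3 c4 by simp
    have "0 < bt n a B" using bt_pos[OF ab(1) ab(2) B(2)] .
    moreover have "0 \<le> bt n b B" using ab by (intro bt_nonneg) auto
    moreover have "mixr p True f = a" "mixr p False f = b" unfolding mixr_T mixr_F fT fF a_def b_def by simp_all
    ultimately have "nontrivial p B n (\<lambda>_. f)"
      unfolding nontrivial_def prob_nontriv[OF p01 f] by simp
    thus "is_strategy f \<and> is_BNE p B n (\<lambda>_. f) \<and> nontrivial p B n (\<lambda>_. f)" using f bne by simp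
  qed
qed

lemma sym_eq_char:
  assumes p: "1/2 < p" "p < 1" and B: "1 \<le> B" "B \<le> n"
  shows "sym_eq p B n True = 1 \<and> solL p (n-1) (B-1) (sym_eq p B n False) \<and> is_strategy (sym_eq p B n)"
proof -
  have k: "B - 1 \<le> n - 1" using B by simp
  obtain l0 where l0: "solL p (n-1) (B-1) l0" using sol_exists[OF p k] by blast
  define f0 where "f0 = (\<lambda>s::bool. if s then 1 else l0)"
  have "f0 True = 1 \<and> solL p (n-1) (B-1) (f0 False)" using l0 unfolding f0_def by simp
  hence P0: "is_strategy f0 \<and> is_BNE p B n (\<lambda>_. f0) \<and> nontrivial p B n (\<lambda>_. f0)"
    by (rule char[OF p B, THEN iffD2])
  have uniq: "f = f0" if "is_strategy f \<and> is_BNE p B n (\<lambda>_. f) \<and> nontrivial p B n (\<lambda>_. f)" for f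
  proof -
    have c: "f True = 1 \<and> solL p (n-1) (B-1) (f False)" by (rule char[OF p B, THEN iffD1, OF that])
    hence "f False = l0" using sol_unique[OF p k] l0 by blast
    with c show ?thesis unfolding f0_def by (auto simp: fun_eq_iff)
  qed
  have "sym_eq p B n = f0"
    unfolding sym_eq_def by (rule the_equality[where P="\<lambda>f. is_strategy f \<and> is_BNE p B n (\<lambda>_. f) \<and> nontrivial p B n (\<lambda>_. f)", OF P0]) (rule uniq)
  thus ?thesis using P0 l0 unfolding f0_def by simp
qed

lemma seqbound:
  fixes f :: "nat \<Rightarrow> real" and \<rho> :: real
  assumes f0: "\<And>t. 0 \<le> f t" and r: "0 \<le> \<rho>" "\<rho> \<le> 1" and d: "1 \<le> d" "real d * (1 - \<rho>) \<le> 1/2"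
    and step: "\<And>t. Suc t < d \<Longrightarrow> \<rho> * f t \<le> f (Suc t)"
    and s: "(\<Sum>t<d. f t) \<le> 1"
  shows "f 0 \<le> 2 / real d"
proof -
  have ind: "\<rho>^t * f 0 \<le> f t" if "t < d" for t
    using that
  proof (induction t)
    case 0 thus ?case by simp
  next
    case (Suc t)
    hence "\<rho>^t * f 0 \<le> f t" by simp
    hence "\<rho> * (\<rho>^t * f 0) \<le> \<rho> * f t" using r by (intro mult_left_mono) auto
    also have "\<dots> \<le> f (Suc t)" using step Suc.prems by simp
    finally show ?case by (simp add: mult_ac)
  qed
  have half: "1/2 \<le> \<rho>^t" if "t < d" for t
  proof -
    have "1 + real d * (\<rho> - 1) \<le> (1 + (\<rho> - 1))^d"
      by (rule Bernoulli_inequality) (use r in simp)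
    hence "1/2 \<le> \<rho>^d" using d(2) by (simp add: algebra_simps)
    also have "\<rho>^d \<le> \<rho>^t" using that r by (intro power_decreasing) auto
    finally show ?thesis .
  qed
  have "(\<Sum>t<d. 1/2 * f 0) \<le> (\<Sum>t<d. f t)"
  proof (rule sum_mono)
    fix t assume "t \<in> {..<d}"
    hence t: "t < d" by simp
    have "1/2 * f 0 \<le> \<rho>^t * f 0" using half[OF t] f0[of 0] by (intro mult_right_mono) auto
    also have "\<dots> \<le> f t" using ind[OF t] .
    finally show "1/2 * f 0 \<le> f t" .
  qed
  hence "real d * (1/2 * f 0) \<le> 1" using s by simp
  thus ?thesis using d(1) by (simp add: field_simps)
qed

lemma pm_ratio:
  assumes "j < m"
  shows "pm m x (Suc j) * (real (Suc j) * (1-x)) = pm m x j * (real (m-j) * x)"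
proof -
  have c: "real (m choose Suc j) * real (Suc j) = real (m choose j) * real (m - j)"
  proof -
    have "Suc j * (m choose Suc j) = (m - j) * (m choose j)"
      by (simp only: binomial_absorption binomial_absorb_comp)
    hence "real (Suc j * (m choose Suc j)) = real ((m - j) * (m choose j))" by (simp only:)
    thus ?thesis by (simp only: of_nat_mult mult.commute)
  qed
  have "m - j = Suc (m - Suc j)" using assms by simp
  hence e: "(1-x)^(m-j) = (1-x) * (1-x)^(m - Suc j)" by simp
  have "pm m x (Suc j) * (real (Suc j) * (1-x)) = (real (m choose Suc j) * real (Suc j)) * (x * x^j) * ((1-x) * (1-x)^(m - Suc j))"
    unfolding pm_def by (simp add: mult_ac)
  also have "\<dots> = pm m x j * (real (m-j) * x)"
    unfolding c pm_def e by (simp add: mult_ac)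
  finally show ?thesis .
qed

lemma pm_sum_le:
  assumes "0 \<le> x" "x \<le> 1" "S \<subseteq> {..m}"
  shows "(\<Sum>j\<in>S. pm m x j) \<le> 1"
proof -
  have "(\<Sum>j\<in>S. pm m x j) \<le> (\<Sum>j\<in>{0..m}. pm m x j)"
    by (rule sum_mono2) (use assms in \<open>auto intro: pm_nonneg\<close>)
  also have "\<dots> = 1" using bt_0[of m x] unfolding bt_def pm_def .
  finally show ?thesis .
qed


lemma pm_mid:
  assumes d: "1 \<le> d" and x: "0 < x" "x < 1" and k: "k \<le> m"
    and D1: "4*d*(d+1) \<le> k+1" and D2: "4*d*(d+1) \<le> m-k"
  shows "pm m x k \<le> 2 / real d"
proof -
  define K where "K = real k + 1"
  define R where "R = real (m-k)"
  define dd where "dd = real d"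
  have dd: "1 \<le> dd" using d unfolding dd_def by simp
  define X where "X = 4*dd*(dd+1)"
  have "real (4*d*(d+1)) \<le> real (k+1)" using D1 by (simp only: of_nat_le_iff)
  hence KD: "X \<le> K" unfolding K_def dd_def X_def by (simp add: algebra_simps)
  have "real (4*d*(d+1)) \<le> real (m-k)" using D2 by (simp only: of_nat_le_iff)
  hence RD: "X \<le> R" unfolding R_def dd_def X_def by (simp add: algebra_simps)
  have dd1: "dd + 1 \<le> X"
  proof -
    have "1 * (dd+1) \<le> (4*dd) * (dd+1)" using dd by (intro mult_right_mono) auto
    thus ?thesis unfolding X_def by simp
  qed
  have Xpos: "0 < X" using dd1 dd by linarith
  have Kpos: "0 < K" and Rpos: "0 < R" using KD RD Xpos by linarith+
  define \<alpha> where "\<alpha> = (dd+1)/R"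
  define \<beta> where "\<beta> = (dd+1)/K"
  define \<rho> where "\<rho> = (1-\<alpha>)*(1-\<beta>)"
  have a0: "0 \<le> \<alpha>" and b0: "0 \<le> \<beta>" unfolding \<alpha>_def \<beta>_def using Kpos Rpos dd by auto
  have aX: "\<alpha> \<le> (dd+1)/X" unfolding \<alpha>_def using RD Xpos dd by (intro divide_left_mono) auto
  have bX: "\<beta> \<le> (dd+1)/X" unfolding \<beta>_def using KD Xpos dd by (intro divide_left_mono) auto
  have X1: "(dd+1)/X \<le> 1" using dd1 Xpos by simp
  have a2: "\<alpha> \<le> 1" and b2: "\<beta> \<le> 1" using aX bX X1 by linarith+
  have X4: "dd * ((dd+1)/X) = 1/4" unfolding X_def using dd Xpos[unfolded X_def] by (simp add: field_simps)
  have r0: "0 \<le> \<rho>" "\<rho> \<le> 1" unfolding \<rho>_def using a0 a2 b0 b2 by (auto intro: mult_nonneg_nonneg mult_le_one)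
  have "1 - \<rho> \<le> \<alpha> + \<beta>" unfolding \<rho>_def using a0 b0 by (simp add: algebra_simps)
  hence "dd * (1 - \<rho>) \<le> dd * (\<alpha> + \<beta>)" using dd by (intro mult_left_mono) auto
  also have "\<dots> \<le> dd * ((dd+1)/X + (dd+1)/X)"
    by (intro mult_left_mono add_mono aX bX) (use dd in auto)
  also have "\<dots> = 1/2" using X4 by (simp add: algebra_simps)
  finally have rd: "real d * (1 - \<rho>) \<le> 1/2" unfolding dd_def .
  have am: "(1-\<alpha>) * R = R - (dd+1)" unfolding \<alpha>_def using Rpos by (simp add: field_simps)
  have bk: "(1-\<beta>) * K = K - (dd+1)" unfolding \<beta>_def using Kpos by (simp add: field_simps)
  have nd: "d + 1 \<le> 4*d*(d+1)"
  proof -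
    have "1 * (d+1) \<le> (4*d) * (d+1)" using d by (intro mult_le_mono1) simp
    thus ?thesis by simp
  qed
  have dk: "d \<le> m - k" "d \<le> k" using nd D1 D2 by linarith+
  consider "K * (1-x) \<le> R * x" | "R * x \<le> K * (1-x)" by linarith
  thus ?thesis
  proof cases
    case 1
    define f where "f = (\<lambda>t. pm m x (k+t))"
    have "f 0 \<le> 2 / real d"
    proof (rule seqbound[OF _ r0 d rd])
      show "0 \<le> f t" for t unfolding f_def using x by (intro pm_nonneg) auto
    next
      fix t assume t: "Suc t < d"
      define j where "j = k + t"
      have jm: "j < m" using t dk unfolding j_def by linarith
      have T: "real t \<le> dd" using t unfolding dd_def by simp
      have mj: "real (m-j) = R - real t" unfolding R_def j_def using jm j_def by (simp add: of_nat_diff)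
      have c1: "(1-\<alpha>) * R \<le> real (m-j)" unfolding mj am using T by simp
      have c2: "(1-\<beta>) * (K + real t) \<le> K"
      proof -
        have "(dd+1) \<le> (dd+1) * ((K + real t)/K)" using Kpos dd by (simp add: field_simps)
        hence "(1-\<beta>) * (K + real t) \<le> K + real t - (dd+1)"
          unfolding \<beta>_def using Kpos by (simp add: field_simps)
        thus ?thesis using T by simp
      qed
      have "\<rho> * ((real j + 1) * (1-x)) = (1-\<alpha>) * ((1-\<beta>) * (K + real t)) * (1-x)"
        unfolding \<rho>_def j_def K_def by (simp add: algebra_simps)
      also have "\<dots> \<le> (1-\<alpha>) * K * (1-x)"
        using c2 a2 x by (intro mult_right_mono mult_left_mono) auto
      also have "\<dots> \<le> (1-\<alpha>) * (R * x)"
        using mult_left_mono[OF 1, of "1-\<alpha>"] a2 by (simp add: mult_ac)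
      also have "\<dots> = ((1-\<alpha>) * R) * x" by simp
      also have "\<dots> \<le> real (m-j) * x" using c1 x by (intro mult_right_mono) auto
      finally have ineq: "\<rho> * ((real j + 1) * (1-x)) \<le> real (m-j) * x" .
      have id: "f (Suc t) * (real (Suc j) * (1-x)) = f t * (real (m-j) * x)"
        unfolding f_def j_def using pm_ratio[OF jm[unfolded j_def], of x] by simp
      have ft: "0 \<le> f t" unfolding f_def using x by (intro pm_nonneg) auto
      have P: "0 < real (Suc j) * (1-x)" using x by simp
      have "(\<rho> * f t) * (real (Suc j) * (1-x)) = f t * (\<rho> * ((real j + 1) * (1-x)))" by (simp add: mult_ac)
      also have "\<dots> \<le> f t * (real (m-j) * x)" using ineq ft by (intro mult_left_mono) auto
      also have "\<dots> = f (Suc t) * (real (Suc j) * (1-x))" using id by simp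
      finally have h: "(\<rho> * f t) * (real (Suc j) * (1-x)) \<le> f (Suc t) * (real (Suc j) * (1-x))" .
      show "\<rho> * f t \<le> f (Suc t)" by (rule mult_right_le_imp_le[OF h P])
    next
      have "(\<Sum>t<d. f t) = (\<Sum>j\<in>(\<lambda>t. k+t) ` {..<d}. pm m x j)"
        unfolding f_def by (subst sum.reindex) (auto simp: inj_on_def)
      also have "\<dots> \<le> 1" by (rule pm_sum_le) (use x dk in auto)
      finally show "(\<Sum>t<d. f t) \<le> 1" .
    qed
    thus ?thesis unfolding f_def by simp
  next
    case 2
    define f where "f = (\<lambda>t. pm m x (k-t))"
    have "f 0 \<le> 2 / real d"
    proof (rule seqbound[OF _ r0 d rd])
      show "0 \<le> f t" for t unfolding f_def using x by (intro pm_nonneg) auto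
    next
      fix t assume t: "Suc t < d"
      define j where "j = k - Suc t"
      have jk: "Suc j = k - t" "Suc t \<le> k" using t dk unfolding j_def by auto
      have jm: "j < m" using jk k by linarith
      have T: "real t + 1 \<le> dd" using t unfolding dd_def by simp
      have mj: "real (m-j) = R + real t + 1" unfolding R_def j_def using jk k by (simp add: of_nat_diff)
      have sj: "real (Suc j) = K - real t - 1" unfolding K_def using jk by (simp add: of_nat_diff)
      have c1: "(1-\<beta>) * K \<le> real (Suc j)" unfolding sj bk using T by simp
      have c2: "(1-\<alpha>) * real (m-j) \<le> R"
      proof -
        have "(dd+1) \<le> (dd+1) * ((R + real t + 1)/R)" using Rpos dd by (simp add: field_simps)
        hence "(1-\<alpha>) * (R + real t + 1) \<le> R + real t + 1 - (dd+1)"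
          unfolding \<alpha>_def using Rpos by (simp add: field_simps)
        thus ?thesis unfolding mj using T by simp
      qed
      have "\<rho> * (real (m-j) * x) = (1-\<beta>) * ((1-\<alpha>) * real (m-j)) * x"
        unfolding \<rho>_def by (simp add: algebra_simps)
      also have "\<dots> \<le> (1-\<beta>) * R * x"
        using c2 b2 x by (intro mult_right_mono mult_left_mono) auto
      also have "\<dots> \<le> (1-\<beta>) * (K * (1-x))"
        using mult_left_mono[OF 2, of "1-\<beta>"] b2 by (simp add: mult_ac)
      also have "\<dots> = ((1-\<beta>) * K) * (1-x)" by simp
      also have "\<dots> \<le> real (Suc j) * (1-x)" using c1 x by (intro mult_right_mono) auto
      finally have ineq: "\<rho> * (real (m-j) * x) \<le> real (Suc j) * (1-x)" .
      have id: "f t * (real (Suc j) * (1-x)) = f (Suc t) * (real (m-j) * x)"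
        unfolding f_def using pm_ratio[OF jm, of x] jk by (simp add: j_def)
      have ft: "0 \<le> f t" unfolding f_def using x by (intro pm_nonneg) auto
      have P: "0 < real (m-j) * x" using x jm by simp
      have "(\<rho> * f t) * (real (m-j) * x) = f t * (\<rho> * (real (m-j) * x))" by (simp add: mult_ac)
      also have "\<dots> \<le> f t * (real (Suc j) * (1-x))" using ineq ft by (intro mult_left_mono) auto
      also have "\<dots> = f (Suc t) * (real (m-j) * x)" using id by simp
      finally have h: "(\<rho> * f t) * (real (m-j) * x) \<le> f (Suc t) * (real (m-j) * x)" .
      show "\<rho> * f t \<le> f (Suc t)" by (rule mult_right_le_imp_le[OF h P])
    next
      have inj: "inj_on (\<lambda>t. k-t) {..<d}" using dk by (auto simp: inj_on_def)
      have "(\<Sum>t<d. f t) = (\<Sum>j\<in>(\<lambda>t. k-t) ` {..<d}. pm m x j)"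
        unfolding f_def by (subst sum.reindex[OF inj]) auto
      also have "\<dots> \<le> 1" by (rule pm_sum_le) (use x k in auto)
      finally show "(\<Sum>t<d. f t) \<le> 1" .
    qed
    thus ?thesis unfolding f_def by simp
  qed
qed


lemma pm_le1: "0 \<le> x \<Longrightarrow> x \<le> 1 \<Longrightarrow> pm m x k \<le> 1"
proof -
  assume x: "0 \<le> x" "x \<le> 1"
  show ?thesis
  proof (cases "k \<le> m")
    case True
    have "pm m x k \<le> pm m x k + bt m x (Suc k)" using bt_nonneg[OF x] by simp
    also have "\<dots> = bt m x k" using bt_split[OF True] by simp
    also have "\<dots> \<le> 1" using bt_le1[OF x] .
    finally show ?thesis .
  next
    case False
    hence z: "m choose k = 0" by simp
    show ?thesis unfolding pm_def z by simp
  qed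
qed

lemma pm_shift:
  assumes "k \<le> m"
  shows "(1-x) * pm m x k = real (Suc m - k) / real (Suc m) * pm (Suc m) x k"
proof -
  have c: "(Suc m - k) * (Suc m choose k) = Suc m * (m choose k)"
    using binomial_absorb_comp[of "Suc m" k] by simp
  hence c': "real (Suc m - k) * real (Suc m choose k) = real (Suc m) * real (m choose k)"
    by (metis of_nat_mult)
  have e: "(1-x)^(Suc m - k) = (1-x) * (1-x)^(m-k)" using assms by (simp add: Suc_diff_le)
  have "real (Suc m - k) / real (Suc m) * pm (Suc m) x k
      = (real (Suc m - k) * real (Suc m choose k)) / real (Suc m) * x^k * (1-x)^(Suc m - k)"
    unfolding pm_def by simp
  also have "\<dots> = real (m choose k) * x^k * (1-x)^(Suc m - k)" unfolding c' by simp
  also have "\<dots> = (1-x) * pm m x k" unfolding e pm_def by simp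
  finally show ?thesis by simp
qed

lemma pm_small:
  assumes c: "0 < c" "c < 1" and e: "0 < \<epsilon>"
  shows "\<exists>M. \<forall>m\<ge>M. \<forall>x k. c \<le> x \<longrightarrow> x \<le> 1 \<longrightarrow> k \<le> m \<longrightarrow> (1-x) * pm m x k \<le> \<epsilon>"
proof -
  define d where "d = nat \<lceil>2/\<epsilon>\<rceil> + 1"
  have d1: "1 \<le> d" unfolding d_def by simp
  have "2/\<epsilon> \<le> real d" unfolding d_def by linarith
  hence d2: "2 / real d \<le> \<epsilon>" using e d1 by (simp add: field_simps)
  define D where "D = 4*d*(d+1)"
  have L: "(\<lambda>m. real m ^ D * (1-c)^m) \<longlonglongrightarrow> 0" using c by real_asymp
  have pos: "0 < \<epsilon> * (1-c)^D" using e c by simp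
  obtain M1 where M1: "\<And>m. m \<ge> M1 \<Longrightarrow> real m ^ D * (1-c)^m < \<epsilon> * (1-c)^D"
    using order_tendstoD(2)[OF L pos] unfolding eventually_sequentially by blast
  define M2 where "M2 = nat \<lceil>real D / \<epsilon>\<rceil>"
  define M where "M = max (max M1 M2) (D+1)"
  show ?thesis
  proof (intro exI[of _ M] allI impI)
    fix m x k assume m: "M \<le> m" and x: "c \<le> x" "x \<le> 1" and k: "k \<le> m"
    show "(1-x) * pm m x k \<le> \<epsilon>"
    proof (cases "x = 1")
      case True thus ?thesis using e by simp
    next
      case False
      hence x1: "0 < x" "x < 1" using x c by auto
      have pm0: "0 \<le> pm m x k" using x1 by (intro pm_nonneg) auto
      have pmx: "(1-x) * pm m x k \<le> pm m x k" using x1 pm0 by (simp add: mult_left_le_one_le)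
      consider "m - k < D" | "k + 1 < D" | "D \<le> k + 1" "D \<le> m - k" by linarith
      thus ?thesis
      proof cases
        case 1
        have "(1-x) * pm m x k = real (Suc m - k) / real (Suc m) * pm (Suc m) x k" by (rule pm_shift[OF k])
        also have "\<dots> \<le> real (Suc m - k) / real (Suc m) * 1"
          using x1 by (intro mult_left_mono pm_le1) auto
        also have "\<dots> \<le> real D / real (Suc m)"
        proof -
          have "Suc m - k \<le> D" using 1 k by linarith
          hence "real (Suc m - k) \<le> real D" by (simp only: of_nat_le_iff)
          thus ?thesis by (simp add: divide_right_mono)
        qed
        also have "\<dots> \<le> \<epsilon>"
        proof -
          have "real D / \<epsilon> \<le> real M2" unfolding M2_def by linarith
          also have "\<dots> \<le> real (Suc m)" using m unfolding M_def by simp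
          finally show ?thesis using e by (simp add: field_simps)
        qed
        finally show ?thesis .
      next
        case 2
        have mD: "D \<le> m" and m1: "1 \<le> m" and mM1: "M1 \<le> m" using m unfolding M_def by auto
        have "pm m x k = real (m choose k) * x^k * (1-x)^(m-k)" unfolding pm_def ..
        also have "\<dots> \<le> real m ^ D * 1 * (1-c)^(m-D)"
        proof (intro mult_mono)
          have "real (m choose k) \<le> real (m ^ k)" using binomial_le_pow[OF k] by (simp only: of_nat_le_iff)
          also have "\<dots> = real m ^ k" by simp
          also have "\<dots> \<le> real m ^ D" using m1 2 by (intro power_increasing) auto
          finally show "real (m choose k) \<le> real m ^ D" .
          show "x^k \<le> 1" using x1 by (simp add: power_le_one)
          have "(1-x)^(m-k) \<le> (1-c)^(m-k)" using x x1 by (intro power_mono) auto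
          also have "\<dots> \<le> (1-c)^(m-D)" using c 2 by (intro power_decreasing) auto
          finally show "(1-x)^(m-k) \<le> (1-c)^(m-D)" .
        qed (use x1 c in auto)
        also have "\<dots> = real m ^ D * (1-c)^m / (1-c)^D"
        proof -
          have "(1-c)^m = (1-c)^(m-D) * (1-c)^D" using mD by (simp add: power_add[symmetric])
          thus ?thesis using c by simp
        qed
        also have "\<dots> \<le> \<epsilon>" using M1[OF mM1] c by (simp add: field_simps)
        finally show ?thesis using pmx by linarith
      next
        case 3
        have "pm m x k \<le> 2 / real d" by (rule pm_mid[OF d1 x1 k]) (use 3 in \<open>simp_all add: D_def\<close>)
        thus ?thesis using pmx d2 by linarith
      qed
    qed
  qed
qed

lemma bt_nB: "1 \<le> B \<Longrightarrow> B \<le> n \<Longrightarrow> bt n x B = bt (n-1) x (B-1) - (1-x) * pm (n-1) x (B-1)"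
  using bt_Suc_Suc[of "B-1" "n-1" x] by simp

lemma lin1: fixes x1 x2 x3 x4 x5 x6 :: real
  shows "x1 \<le> x2 \<Longrightarrow> x3 \<le> x4 \<Longrightarrow> x4 \<le> x5 + x6 \<Longrightarrow> 1/2 + 1/2*(x1 - x5 - x6) \<le> 1/2*x2 + 1/2*(1-x3)"
  by (simp add: field_simps)

lemma lin2: fixes x1 x2 x3 x4 x5 x6 :: real
  shows "x1 - x2 \<le> x3 \<Longrightarrow> x4 = 1/2 * x3 \<Longrightarrow> 0 \<le> x5 \<Longrightarrow>
   1/2*(x1 - x5) + 1/2*(1 - (x2 - x6)) \<le> 1/2 + x4 + 1/2*x6"
  by (simp add: field_simps)

lemma theta_setup:
  assumes p: "1/2 < p" "p < 1" and B: "1 \<le> B" "B \<le> n"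
  shows "\<exists>l. solL p (n-1) (B-1) l \<and> 0 \<le> l \<and> l < 1 \<and>
     theta p B n = 1/2 * bt n (p + (1-p)*l) B + 1/2 * (1 - bt n (1-p + p*l) B)"
proof -
  have p01: "0 \<le> p" "p \<le> 1" using p by auto
  define f where "f = sym_eq p B n"
  have c: "f True = 1" "solL p (n-1) (B-1) (f False)" "is_strategy f"
    using sym_eq_char[OF p B] unfolding f_def by auto
  have l: "0 \<le> f False" "f False < 1" using c(2) unfolding solL_def by auto
  have "theta p B n = 1/2 * bt n (mixr p True f) B + 1/2 * (1 - bt n (mixr p False f) B)"
    using theta_formula[OF p01 c(3)[unfolded f_def]] unfolding f_def .
  moreover have "mixr p True f = p + (1-p) * f False" "mixr p False f = 1-p + p * f False"
    unfolding mixr_T mixr_F c(1) by simp_all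
  ultimately show ?thesis using c l by (intro exI[of _ "f False"]) simp
qed

lemma theta_upper:
  assumes p: "1/2 < p" "p < 1" and B: "1 \<le> B" "B \<le> n"
  shows "\<exists>x. 1-p \<le> x \<and> x \<le> 1 \<and> theta p B n \<le> (3*p-1)/(2*p) + 1/2 * ((1-x) * pm (n-1) x (B-1))"
proof -
  obtain l where l: "solL p (n-1) (B-1) l" "0 \<le> l" "l < 1"
    and th: "theta p B n = 1/2 * bt n (p + (1-p)*l) B + 1/2 * (1 - bt n (1-p + p*l) B)"
    using theta_setup[OF p B] by blast
  define a where "a = p + (1-p)*l"
  define b where "b = 1-p + p*l"
  have pl: "0 \<le> (1-p)*l" "(1-p)*l \<le> 1-p" "0 \<le> p*l" "p*l \<le> p"
    using l p by (auto intro!: mult_left_le)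
  have ab: "0 \<le> a" "a \<le> 1" "1-p \<le> b" "b \<le> 1" unfolding a_def b_def using pl p by linarith+
  let ?Qa = "bt (n-1) a (B-1)" and ?Qb = "bt (n-1) b (B-1)"
  let ?Pa = "(1-a) * pm (n-1) a (B-1)" and ?Pb = "(1-b) * pm (n-1) b (B-1)"
  have Pa: "0 \<le> ?Pa" using ab by (intro mult_nonneg_nonneg pm_nonneg) auto
  have Qa1: "?Qa \<le> 1" using ab by (intro bt_le1) auto
  have Qa0: "0 \<le> ?Qa" using ab by (intro bt_nonneg) auto
  have phi: "phi p (n-1) (B-1) l \<le> 0" using l(1) unfolding solL_def by auto
  hence ph: "(1-p) * ?Qa \<le> p * ?Qb" unfolding phi_def a_def b_def by simp
  have th2: "theta p B n = 1/2 * (?Qa - ?Pa) + 1/2 * (1 - (?Qb - ?Pb))"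
    unfolding th bt_nB[OF B] a_def b_def ..
  have "p * (?Qa - ?Qb) \<le> (2*p-1) * ?Qa" using ph by (simp add: algebra_simps)
  also have "\<dots> \<le> 2*p-1" using Qa1 p by (simp add: mult_left_le)
  finally have "?Qa - ?Qb \<le> (2*p-1)/p" using p by (simp add: field_simps)
  moreover have E: "(2*p-1)/(2*p) = 1/2 * ((2*p-1)/p)" by simp
  ultimately have "theta p B n \<le> 1/2 + (2*p-1)/(2*p) + 1/2 * ?Pb" unfolding th2 using Pa by (rule lin2)
  also have "1/2 + (2*p-1)/(2*p) = (3*p-1)/(2*p)" using p by (simp add: field_simps)
  finally show ?thesis using ab by (intro exI[of _ b]) auto
qed

lemma theta_lower:
  assumes p: "1/2 < p" "p < 1" and B: "1 \<le> B" "B \<le> n"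
  shows "1/2 + 1/2 * (bt n p B - (1-p)/p - bt (n-1) (1-p) (B-1)) \<le> theta p B n"
proof -
  obtain l where l: "solL p (n-1) (B-1) l" "0 \<le> l" "l < 1"
    and th: "theta p B n = 1/2 * bt n (p + (1-p)*l) B + 1/2 * (1 - bt n (1-p + p*l) B)"
    using theta_setup[OF p B] by blast
  define a where "a = p + (1-p)*l"
  define b where "b = 1-p + p*l"
  have pl: "0 \<le> (1-p)*l" "(1-p)*l \<le> 1-p" "0 \<le> p*l" "p*l \<le> p"
    using l p by (auto intro!: mult_left_le)
  have ab: "p \<le> a" "a \<le> 1" "1-p \<le> b" "b \<le> 1" unfolding a_def b_def using pl p by linarith+
  let ?Qa = "bt (n-1) a (B-1)" and ?Qb = "bt (n-1) b (B-1)" and ?Q1 = "bt (n-1) (1-p) (B-1)"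
  have Ta: "bt n p B \<le> bt n a B" using ab p by (intro bt_mono) auto
  have Pb: "0 \<le> (1-b) * pm (n-1) b (B-1)" using ab p by (intro mult_nonneg_nonneg pm_nonneg) auto
  have Tb: "bt n b B \<le> ?Qb" using Pb unfolding bt_nB[OF B] by simp
  have Q10: "0 \<le> ?Q1" using p by (intro bt_nonneg) auto
  have Qb: "?Qb \<le> (1-p)/p + ?Q1"
  proof (cases "l = 0")
    case True
    hence "b = 1-p" unfolding b_def by simp
    moreover have "0 \<le> (1-p)/p" using p by simp
    ultimately show ?thesis by simp
  next
    case False
    hence "phi p (n-1) (B-1) l = 0" using l(1) unfolding solL_def by auto
    hence e: "p * ?Qb = (1-p) * ?Qa" unfolding phi_def a_def b_def by simp
    have "?Qa \<le> 1" using ab p by (intro bt_le1) auto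
    hence "(1-p) * ?Qa \<le> 1-p" using p by (simp add: mult_left_le)
    hence "p * ?Qb \<le> 1 - p" using e by simp
    hence "?Qb \<le> (1-p)/p" using p by (simp add: field_simps)
    thus ?thesis using Q10 by simp
  qed
  show ?thesis unfolding th a_def[symmetric] b_def[symmetric] by (rule lin1[OF Ta Tb Qb])
qed

lemma bt_prob:
  assumes "0 \<le> x" "x \<le> 1"
  shows "bt m x k = measure_pmf.prob (binomial_pmf m x) {j. k \<le> j}"
proof -
  have "measure_pmf.prob (binomial_pmf m x) {j. k \<le> j} =
      (\<Sum>j\<le>m. pmf (binomial_pmf m x) j *\<^sub>R (if j \<in> {j. k \<le> j} then 1 else 0))"
    unfolding prob_as_E
    by (rule integral_measure_pmf) (use assms in \<open>auto simp: set_pmf_binomial_eq split: if_splits\<close>)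
  also have "\<dots> = (\<Sum>j\<le>m. pmf (binomial_pmf m x) j * (if k \<le> j then 1 else 0))" by simp
  also have "\<dots> = bt m x k" by (rule sum_binom_ind[OF assms])
  finally show ?thesis ..
qed

lemma exp_pow: "exp (real_of_int (- 2 * int n) * \<delta>\<^sup>2) = exp (-2 * \<delta>\<^sup>2) ^ n"
proof -
  have "real_of_int (- 2 * int n) * \<delta>\<^sup>2 = real n * (-2 * \<delta>\<^sup>2)" by simp
  thus ?thesis by (simp only: exp_of_nat_mult)
qed

lemma lim1:
  assumes p: "1/2 < p" "p < 1"
  shows "(\<lambda>n. bt n p (n div 2 + 1)) \<longlonglongrightarrow> 1"
proof -
  define \<delta> where "\<delta> = p - 1/2"
  define r where "r = exp (-2 * \<delta>\<^sup>2)"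
  have r: "0 < r" "r < 1" unfolding r_def \<delta>_def using p by auto
  have d0: "0 \<le> \<delta>" unfolding \<delta>_def using p by simp
  have bd: "1 - r^n \<le> bt n p (n div 2 + 1)" if n: "0 < n" for n
  proof -
    interpret binomial_distribution n p by unfold_locales (use p in auto)
    have "1 - bt n p (n div 2 + 1) = measure_pmf.prob (binomial_pmf n p) (UNIV - {j. n div 2 + 1 \<le> j})"
      using bt_prob[of p n "n div 2 + 1"] p measure_pmf.prob_compl[of "{j. n div 2 + 1 \<le> j}" "binomial_pmf n p"]
      by simp
    also have "\<dots> \<le> measure_pmf.prob (binomial_pmf n p) {x. real x / real n \<le> p - \<delta>}"
    proof (rule measure_pmf.finite_measure_mono)
      show "UNIV - {j. n div 2 + 1 \<le> j} \<subseteq> {x. real x / real n \<le> p - \<delta>}"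
      proof
        fix j assume "j \<in> UNIV - {j. n div 2 + 1 \<le> j}"
        hence "2 * j \<le> n" by auto
        hence "2 * real j \<le> real n" by (metis of_nat_le_iff of_nat_mult of_nat_numeral)
        thus "j \<in> {x. real x / real n \<le> p - \<delta>}" using n unfolding \<delta>_def by (simp add: field_simps)
      qed
    qed simp
    also have "\<dots> \<le> r^n" using prob_le'[OF n, of \<delta>] d0 unfolding r_def exp_pow by simp
    finally show ?thesis by simp
  qed
  have "(\<lambda>n. 1 - r^n) \<longlonglongrightarrow> 1 - 0" using r by (intro tendsto_intros LIMSEQ_power_zero) auto
  hence lo: "(\<lambda>n. 1 - r^n) \<longlonglongrightarrow> 1" by simp
  show ?thesis
  proof (rule tendsto_sandwich[OF _ _ lo tendsto_const])
    show "eventually (\<lambda>n. 1 - r^n \<le> bt n p (n div 2 + 1)) sequentially"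
      unfolding eventually_sequentially using bd by (intro exI[of _ 1]) auto
    show "eventually (\<lambda>n. bt n p (n div 2 + 1) \<le> 1) sequentially"
      using p by (intro always_eventually allI bt_le1) auto
  qed
qed

lemma lim2:
  assumes p: "1/2 < p" "p < 1"
  shows "(\<lambda>n. bt (n-1) (1-p) (n div 2)) \<longlonglongrightarrow> 0"
proof -
  define \<delta> where "\<delta> = p - 1/2"
  define r where "r = exp (-2 * \<delta>\<^sup>2)"
  have r: "0 < r" "r < 1" unfolding r_def \<delta>_def using p by auto
  have d0: "0 \<le> \<delta>" unfolding \<delta>_def using p by simp
  have bd: "bt (n-1) (1-p) (n div 2) \<le> r^n / r" if n: "2 \<le> n" for n
  proof -
    define m where "m = n - 1"
    have m: "0 < m" "n = Suc m" using n unfolding m_def by auto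
    interpret binomial_distribution m "1-p" by unfold_locales (use p in auto)
    have "bt (n-1) (1-p) (n div 2) = measure_pmf.prob (binomial_pmf m (1-p)) {j. n div 2 \<le> j}"
      using bt_prob[of "1-p" m "n div 2"] p unfolding m_def by simp
    also have "\<dots> \<le> measure_pmf.prob (binomial_pmf m (1-p)) {x. (1-p) + \<delta> \<le> real x / real m}"
    proof (rule measure_pmf.finite_measure_mono)
      show "{j. n div 2 \<le> j} \<subseteq> {x. (1-p) + \<delta> \<le> real x / real m}"
      proof
        fix j assume "j \<in> {j. n div 2 \<le> j}"
        hence "m \<le> 2 * j" using m by auto
        hence "real m \<le> 2 * real j" by (metis of_nat_le_iff of_nat_mult of_nat_numeral)
        thus "j \<in> {x. (1-p) + \<delta> \<le> real x / real m}" using m unfolding \<delta>_def by (simp add: field_simps)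
      qed
    qed simp
    also have "\<dots> \<le> r^m" using prob_ge'[OF m(1), of \<delta>] d0 unfolding r_def exp_pow by simp
    also have "r^m = r^n / r" using r m by simp
    finally show ?thesis .
  qed
  have hi: "(\<lambda>n. r^n / r) \<longlonglongrightarrow> 0 / r" using r by (intro tendsto_intros LIMSEQ_power_zero) auto
  show ?thesis
  proof (rule tendsto_sandwich[OF _ _ tendsto_const])
    show "eventually (\<lambda>n. 0 \<le> bt (n-1) (1-p) (n div 2)) sequentially"
      using p by (intro always_eventually allI bt_nonneg) auto
    show "eventually (\<lambda>n. bt (n-1) (1-p) (n div 2) \<le> r^n / r) sequentially"
      unfolding eventually_sequentially using bd by (intro exI[of _ 2]) auto
    show "(\<lambda>n. r^n / r) \<longlonglongrightarrow> 0" using hi by simp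
  qed
qed

theorem theorem2:
  fixes p :: real
  assumes "1/2 < p" and "p < 1"
  shows "(\<lambda>n. Max ((\<lambda>B. theta p B n) ` {1..n})) \<longlonglongrightarrow> (3*p - 1) / (2*p)
         \<and> (3*p - 1) / (2*p) < 1"
proof
  have p: "1/2 < p" "p < 1" using assms by auto
  define T where "T = (3*p - 1) / (2*p)"
  define L where "L = (\<lambda>n. 1/2 + 1/2*(bt n p (n div 2 + 1) - (1-p)/p - bt (n-1) (1-p) (n div 2)))"
  have "L \<longlonglongrightarrow> 1/2 + 1/2*(1 - (1-p)/p - 0)"
    unfolding L_def by (intro tendsto_intros lim1[OF p] lim2[OF p])
  moreover have "1/2 + 1/2*(1 - (1-p)/p - 0) = T" unfolding T_def using p by (simp add: field_simps)
  ultimately have LT: "L \<longlonglongrightarrow> T" by simp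
  have low: "L n \<le> Max ((\<lambda>B. theta p B n) ` {1..n})" if n: "1 \<le> n" for n
  proof -
    define B0 where "B0 = n div 2 + 1"
    have B0: "1 \<le> B0" "B0 \<le> n" unfolding B0_def using n by auto
    have "L n = 1/2 + 1/2*(bt n p B0 - (1-p)/p - bt (n-1) (1-p) (B0 - 1))"
      unfolding L_def B0_def by simp
    also have "\<dots> \<le> theta p B0 n" by (rule theta_lower[OF p B0])
    also have "\<dots> \<le> Max ((\<lambda>B. theta p B n) ` {1..n})" using B0 by (intro Max_ge) auto
    finally show ?thesis .
  qed
  have up: "\<exists>N. \<forall>n\<ge>N. Max ((\<lambda>B. theta p B n) ` {1..n}) < T + \<epsilon>" if e: "0 < \<epsilon>" for \<epsilon>
  proof -
    obtain M where M: "\<And>m x k. m \<ge> M \<Longrightarrow> 1-p \<le> x \<Longrightarrow> x \<le> 1 \<Longrightarrow> k \<le> m \<Longrightarrow> (1-x) * pm m x k \<le> \<epsilon>"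
      using pm_small[of "1-p" \<epsilon>] p e by auto
    show ?thesis
    proof (intro exI[of _ "Suc M"] allI impI)
      fix n assume n: "Suc M \<le> n"
      have all: "theta p B n < T + \<epsilon>" if B: "B \<in> {1..n}" for B
      proof -
        have B': "1 \<le> B" "B \<le> n" using B by auto
        obtain x where x: "1-p \<le> x" "x \<le> 1" and th: "theta p B n \<le> T + 1/2 * ((1-x) * pm (n-1) x (B-1))"
          using theta_upper[OF p B'] unfolding T_def by blast
        have "(1-x) * pm (n-1) x (B-1) \<le> \<epsilon>" using n B' x by (intro M) auto
        thus ?thesis using th e by linarith
      qed
      have "finite ((\<lambda>B. theta p B n) ` {1..n})" "(\<lambda>B. theta p B n) ` {1..n} \<noteq> {}" using n by auto
      thus "Max ((\<lambda>B. theta p B n) ` {1..n}) < T + \<epsilon>" using all by (simp add: Max_less_iff)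
    qed
  qed
  show "(\<lambda>n. Max ((\<lambda>B. theta p B n) ` {1..n})) \<longlonglongrightarrow> (3*p - 1) / (2*p)"
    unfolding T_def[symmetric]
  proof (rule order_tendstoI)
    fix a assume a: "a < T"
    have "eventually (\<lambda>n. a < L n) sequentially" by (rule order_tendstoD(1)[OF LT a])
    moreover have "eventually (\<lambda>n. 1 \<le> n) sequentially" unfolding eventually_sequentially by auto
    ultimately show "eventually (\<lambda>n. a < Max ((\<lambda>B. theta p B n) ` {1..n})) sequentially"
      by eventually_elim (use low in fastforce)
  next
    fix a assume a: "T < a"
    obtain N where N: "\<And>n. n \<ge> N \<Longrightarrow> Max ((\<lambda>B. theta p B n) ` {1..n}) < T + (a - T)"
      using up[of "a - T"] a by auto
    show "eventually (\<lambda>n. Max ((\<lambda>B. theta p B n) ` {1..n}) < a) sequentially"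
      unfolding eventually_sequentially using N by (intro exI[of _ N]) auto
  qed
next
  show "(3*p - 1) / (2*p) < 1" using assms by (simp add: field_simps)
qed

end
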